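(* Let $R$ be a solvable complex Leibniz algebra whose nilradical $N$ is isomorphic to one of $g^3_{(n,1)}$ ($n\ge7$), $g^1_7$, $g^2_9$, $g^3_{11}$, and with $\dim R=\dim N+1$. Then $R$ has a basis $\{e_1,\dots,e_m,x\}$ ($m=\dim N$) in which $\{e_1,\dots,e_m\}$ spans $N$ with the brackets of the corresponding algebra, and the brackets involving $x$ are as follows (all others involving $x$, including $[x,x]$, being zero): for $N=g^3_{(n,1)}$: $[e_1,x]=-[x,e_1]=e_1$, $[e_i,x]=-[x,e_i]=(i+1)e_i$ for $2\le i\le n-1$, $[e_n,x]=-[x,e_n]=2e_n$; for $N=g^1_7$: $[e_i,x]=-[x,e_i]=ie_i$, $1\le i\le7$; for $N=g^2_9$: $[e_i,x]=-[x,e_i]=ie_i$, $1\le i\le 9$; for $N=g^3_{11}$: $[e_i,x]=-[x,e_i]=ie_i$, $1\le i\le 11$.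
   Context: A Leibniz algebra is a complex vector space with a bilinear bracket satisfying $[u,[v,w]]=[[u,v],w]-[[u,w],v]$; solvable, nilpotent and nilradical (maximal nilpotent ideal) are defined via the derived and lower central series as usual. The following are Lie algebras; only listed brackets of basis elements and their antisymmetric counterparts are nonzero. $g^3_{(n,1)}$ ($n\ge7$), basis $e_1,\dots,e_n$: $[e_1,e_i]=e_{i+1}$ ($2\le i\le n-2$); $[e_i,e_n]=e_{i+2}$ ($2\le i\le n-3$); $[e_2,e_i]=e_{i+3}$ ($3\le i\le n-4$). $g^1_7$: $[e_1,e_i]=e_{i+1}$ ($2\le i\le 5$); $[e_2,e_i]=e_{i+2}$ ($3\le i\le 4$); $[e_i,e_{7-i}]=(-1)^ie_7$ ($2\le i\le 3$). $g^2_9$: $[e_1,e_i]=e_{i+1}$ ($2\le i\le 7$); $[e_2,e_i]=e_{i+2}$ ($3\le i\le 4$); $[e_2,e_5]=3e_7$; $[e_2,e_6]=5e_8$; $[e_3,e_i]=-2e_{i+3}$ ($4\le i\le5$); $[e_i,e_{9-i}]=(-1)^ie_9$ ($2\le i\le 4$). $g^3_{11}$: $[e_1,e_i]=e_{i+1}$ ($2\le i\le 9$); $[e_2,e_i]=e_{i+2}$ ($3\le i\le 4$); $[e_2,e_i]=-e_{i+2}$ ($6\le i\le 7$); $[e_3,e_7]=-e_{10}$; $[e_3,e_i]=e_{i+3}$ ($4\le i\le 5$); $[e_4,e_i]=e_{i+4}$ ($5\le i\le 6$); $[e_i,e_{11-i}]=(-1)^ie_{11}$ ($2\le i\le 5$).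 *)

theory Defs
  imports Main "HOL-Analysis.Analysis"
begin

definition bilinear_br :: "(complex \<Rightarrow> 'a \<Rightarrow> 'a) \<Rightarrow> ('a::ab_group_add \<Rightarrow> 'a \<Rightarrow> 'a) \<Rightarrow> bool" where
  "bilinear_br sc br \<longleftrightarrow>
     (\<forall>u v w. br (u + v) w = br u w + br v w) \<and>
     (\<forall>u v w. br u (v + w) = br u v + br u w) \<and>
     (\<forall>c u v. br (sc c u) v = sc c (br u v)) \<and>
     (\<forall>c u v. br u (sc c v) = sc c (br u v))"

definition leibniz_algebra :: "(complex \<Rightarrow> 'a \<Rightarrow> 'a) \<Rightarrow> ('a::ab_group_add \<Rightarrow> 'a \<Rightarrow> 'a) \<Rightarrow> bool" where
  "leibniz_algebra sc br \<longleftrightarrow> vector_space sc \<and> bilinear_br sc br \<and>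
     (\<forall>u v w. br u (br v w) = br (br u v) w - br (br u w) v)"

definition fin_dim :: "(complex \<Rightarrow> 'a::ab_group_add \<Rightarrow> 'a) \<Rightarrow> bool" where
  "fin_dim sc \<longleftrightarrow> (\<exists>B. finite B \<and> module.span sc B = UNIV)"

fun derived :: "(complex \<Rightarrow> 'a \<Rightarrow> 'a) \<Rightarrow> ('a::ab_group_add \<Rightarrow> 'a \<Rightarrow> 'a) \<Rightarrow> nat \<Rightarrow> 'a set" where
  "derived sc br 0 = UNIV"
| "derived sc br (Suc k) =
     module.span sc {br u v | u v. u \<in> derived sc br k \<and> v \<in> derived sc br k}"

definition solvable :: "(complex \<Rightarrow> 'a \<Rightarrow> 'a) \<Rightarrow> ('a::ab_group_add \<Rightarrow> 'a \<Rightarrow> 'a) \<Rightarrow> bool" where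
  "solvable sc br \<longleftrightarrow> (\<exists>k. derived sc br k = {0})"

fun lower_central :: "(complex \<Rightarrow> 'a \<Rightarrow> 'a) \<Rightarrow> ('a::ab_group_add \<Rightarrow> 'a \<Rightarrow> 'a) \<Rightarrow> 'a set \<Rightarrow> nat \<Rightarrow> 'a set" where
  "lower_central sc br I 0 = I"
| "lower_central sc br I (Suc k) =
     module.span sc {br u v | u v. u \<in> lower_central sc br I k \<and> v \<in> I}"

definition nilpotent_sub :: "(complex \<Rightarrow> 'a \<Rightarrow> 'a) \<Rightarrow> ('a::ab_group_add \<Rightarrow> 'a \<Rightarrow> 'a) \<Rightarrow> 'a set \<Rightarrow> bool" where
  "nilpotent_sub sc br I \<longleftrightarrow> (\<exists>k. lower_central sc br I k = {0})"

definition is_ideal :: "(complex \<Rightarrow> 'a \<Rightarrow> 'a) \<Rightarrow> ('a::ab_group_add \<Rightarrow> 'a \<Rightarrow> 'a) \<Rightarrow> 'a set \<Rightarrow> bool" where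
  "is_ideal sc br I \<longleftrightarrow> module.subspace sc I \<and> (\<forall>u\<in>I. \<forall>v. br u v \<in> I \<and> br v u \<in> I)"

definition is_nilradical :: "(complex \<Rightarrow> 'a \<Rightarrow> 'a) \<Rightarrow> ('a::ab_group_add \<Rightarrow> 'a \<Rightarrow> 'a) \<Rightarrow> 'a set \<Rightarrow> bool" where
  "is_nilradical sc br N \<longleftrightarrow> is_ideal sc br N \<and> nilpotent_sub sc br N \<and>
     (\<forall>I. is_ideal sc br I \<and> nilpotent_sub sc br I \<and> N \<subseteq> I \<longrightarrow> I = N)"

text \<open>The four nilpotent Lie algebras, given by structure constants on the
basis e_1,...,e_m: the coefficient of e_k in [e_i,e_j].  The function *_up
lists the brackets given in the paper; antisymmetry is added in model_sc.\<close>

datatype nil_type = G3 nat | G1_7 | G2_9 | G3_11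

fun nil_valid :: "nil_type \<Rightarrow> bool" where
  "nil_valid (G3 n) = (n \<ge> 7)"
| "nil_valid _ = True"

fun model_dim :: "nil_type \<Rightarrow> nat" where
  "model_dim (G3 n) = n"
| "model_dim G1_7 = 7"
| "model_dim G2_9 = 9"
| "model_dim G3_11 = 11"

definition up_g3 :: "nat \<Rightarrow> nat \<Rightarrow> nat \<Rightarrow> nat \<Rightarrow> complex" where
  "up_g3 n i j k =
     (if i = 1 \<and> 2 \<le> j \<and> j \<le> n - 2 \<and> k = j + 1 then 1 else 0)
   + (if 2 \<le> i \<and> i \<le> n - 3 \<and> j = n \<and> k = i + 2 then 1 else 0)
   + (if i = 2 \<and> 3 \<le> j \<and> j \<le> n - 4 \<and> k = j + 3 then 1 else 0)"

definition up_g17 :: "nat \<Rightarrow> nat \<Rightarrow> nat \<Rightarrow> complex" where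
  "up_g17 i j k =
     (if i = 1 \<and> 2 \<le> j \<and> j \<le> 5 \<and> k = j + 1 then 1 else 0)
   + (if i = 2 \<and> 3 \<le> j \<and> j \<le> 4 \<and> k = j + 2 then 1 else 0)
   + (if 2 \<le> i \<and> i \<le> 3 \<and> j = 7 - i \<and> k = 7 then (-1) ^ i else 0)"

definition up_g29 :: "nat \<Rightarrow> nat \<Rightarrow> nat \<Rightarrow> complex" where
  "up_g29 i j k =
     (if i = 1 \<and> 2 \<le> j \<and> j \<le> 7 \<and> k = j + 1 then 1 else 0)
   + (if i = 2 \<and> 3 \<le> j \<and> j \<le> 4 \<and> k = j + 2 then 1 else 0)
   + (if i = 2 \<and> j = 5 \<and> k = 7 then 3 else 0)
   + (if i = 2 \<and> j = 6 \<and> k = 8 then 5 else 0)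
   + (if i = 3 \<and> 4 \<le> j \<and> j \<le> 5 \<and> k = j + 3 then -2 else 0)
   + (if 2 \<le> i \<and> i \<le> 4 \<and> j = 9 - i \<and> k = 9 then (-1) ^ i else 0)"

definition up_g311 :: "nat \<Rightarrow> nat \<Rightarrow> nat \<Rightarrow> complex" where
  "up_g311 i j k =
     (if i = 1 \<and> 2 \<le> j \<and> j \<le> 9 \<and> k = j + 1 then 1 else 0)
   + (if i = 2 \<and> 3 \<le> j \<and> j \<le> 4 \<and> k = j + 2 then 1 else 0)
   + (if i = 2 \<and> 6 \<le> j \<and> j \<le> 7 \<and> k = j + 2 then -1 else 0)
   + (if i = 3 \<and> j = 7 \<and> k = 10 then -1 else 0)
   + (if i = 3 \<and> 4 \<le> j \<and> j \<le> 5 \<and> k = j + 3 then 1 else 0)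
   + (if i = 4 \<and> 5 \<le> j \<and> j \<le> 6 \<and> k = j + 4 then 1 else 0)
   + (if 2 \<le> i \<and> i \<le> 5 \<and> j = 11 - i \<and> k = 11 then (-1) ^ i else 0)"

fun model_up :: "nil_type \<Rightarrow> nat \<Rightarrow> nat \<Rightarrow> nat \<Rightarrow> complex" where
  "model_up (G3 n) = up_g3 n"
| "model_up G1_7 = up_g17"
| "model_up G2_9 = up_g29"
| "model_up G3_11 = up_g311"

definition model_sc :: "nil_type \<Rightarrow> nat \<Rightarrow> nat \<Rightarrow> nat \<Rightarrow> complex" where
  "model_sc t i j k = model_up t i j k - model_up t j i k"

definition model_carrier :: "nil_type \<Rightarrow> (nat \<Rightarrow> complex) set" where
  "model_carrier t = {v. \<forall>k. k \<notin> {1..model_dim t} \<longrightarrow> v k = 0}"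

definition model_br :: "nil_type \<Rightarrow> (nat \<Rightarrow> complex) \<Rightarrow> (nat \<Rightarrow> complex) \<Rightarrow> (nat \<Rightarrow> complex)" where
  "model_br t u v = (\<lambda>k. if k \<in> {1..model_dim t} then
      (\<Sum>i\<in>{1..model_dim t}. \<Sum>j\<in>{1..model_dim t}. u i * v j * model_sc t i j k) else 0)"

definition iso_to_model :: "(complex \<Rightarrow> 'a \<Rightarrow> 'a) \<Rightarrow> ('a::ab_group_add \<Rightarrow> 'a \<Rightarrow> 'a) \<Rightarrow> 'a set \<Rightarrow> nil_type \<Rightarrow> bool" where
  "iso_to_model sc br N t \<longleftrightarrow> (\<exists>\<phi> :: 'a \<Rightarrow> nat \<Rightarrow> complex.
      bij_betw \<phi> N (model_carrier t) \<and>
      (\<forall>u\<in>N. \<forall>v\<in>N. \<phi> (u + v) = (\<lambda>k. \<phi> u k + \<phi> v k)) \<and>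
      (\<forall>c. \<forall>u\<in>N. \<phi> (sc c u) = (\<lambda>k. c * \<phi> u k)) \<and>
      (\<forall>u\<in>N. \<forall>v\<in>N. \<phi> (br u v) = model_br t (\<phi> u) (\<phi> v)))"

text \<open>Weights of the action of x: [e_i,x] = w_i e_i.\<close>
fun model_wt :: "nil_type \<Rightarrow> nat \<Rightarrow> complex" where
  "model_wt (G3 n) i = (if i = 1 then 1 else if i = n then 2 else of_nat (i + 1))"
| "model_wt G1_7 i = of_nat i"
| "model_wt G2_9 i = of_nat i"
| "model_wt G3_11 i = of_nat i"

end

theory Submission
  imports Defs
begin


definition dl :: "nat \<Rightarrow> nat \<Rightarrow> complex" where "dl i = (\<lambda>k. if k = i then 1 else 0)"

fun wn :: "nil_type \<Rightarrow> nat \<Rightarrow> nat" where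
  "wn (G3 n) i = (if i = 1 then 1 else if i = n then 2 else i + 1)"
| "wn G1_7 i = i"
| "wn G2_9 i = i"
| "wn G3_11 i = i"

lemma model_wt_wn: "model_wt t i = of_nat (wn t i)"
  by (cases t) auto

definition rng :: "nil_type \<Rightarrow> nat set" where "rng t = {1..model_dim t}"

definition Fw :: "nil_type \<Rightarrow> nat \<Rightarrow> (nat \<Rightarrow> complex) set" where
  "Fw t s = {v. \<forall>k\<in>rng t. wn t k < s \<longrightarrow> v k = 0}"

fun tp :: "nil_type \<Rightarrow> nat" where
  "tp (G3 n) = n - 1"
| "tp G1_7 = 7"
| "tp G2_9 = 9"
| "tp G3_11 = 11"

lemma grading:
  assumes "nil_valid t" "i \<in> rng t" "j \<in> rng t" "k \<in> rng t" "model_sc t i j k \<noteq> 0"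
  shows "wn t k = wn t i + wn t j"
proof (cases t)
  case (G3 n)
  then show ?thesis using assms
    by (auto simp: rng_def model_sc_def up_g3_def split: if_splits)
next
  case G1_7
  then show ?thesis using assms
    by (auto simp: rng_def model_sc_def up_g17_def split: if_splits)
next
  case G2_9
  then show ?thesis using assms
    by (auto simp: rng_def model_sc_def up_g29_def split: if_splits)
next
  case G3_11
  then show ?thesis using assms
    by (auto simp: rng_def model_sc_def up_g311_def split: if_splits)
qed

lemma wn_inj: "nil_valid t \<Longrightarrow> inj_on (wn t) (rng t)"
  by (cases t) (auto simp: inj_on_def rng_def split: if_splits)

lemma wn_pos: "nil_valid t \<Longrightarrow> i \<in> rng t \<Longrightarrow> wn t i \<ge> 1"
  by (cases t) (auto simp: rng_def)

lemma tp_top: "nil_valid t \<Longrightarrow> tp t \<in> rng t \<and> (\<forall>i\<in>rng t. i \<noteq> tp t \<longrightarrow> wn t i < wn t (tp t))"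
  by (cases t) (auto simp: rng_def)

lemma tp_bracket: "nil_valid t \<Longrightarrow> \<exists>p\<in>rng t. \<exists>q\<in>rng t. model_sc t p q (tp t) \<noteq> 0"
proof (cases t)
  case (G3 n)
  assume v: "nil_valid t"
  show ?thesis
    apply (rule bexI[of _ 1], rule bexI[of _ "n-2"])
    using v G3 by (auto simp: rng_def model_sc_def up_g3_def)
next
  case G1_7
  show ?thesis
    apply (rule bexI[of _ 2], rule bexI[of _ 5])
    using G1_7 by (auto simp: rng_def model_sc_def up_g17_def)
next
  case G2_9
  show ?thesis
    apply (rule bexI[of _ 2], rule bexI[of _ 7])
    using G2_9 by (auto simp: rng_def model_sc_def up_g29_def)
next
  case G3_11
  show ?thesis
    apply (rule bexI[of _ 2], rule bexI[of _ 9])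
    using G3_11 by (auto simp: rng_def model_sc_def up_g311_def)
qed

lemma sc_antisym: "model_sc t i j k = - model_sc t j i k"
  by (simp add: model_sc_def)


lemma dl_carrier: "i \<in> rng t \<Longrightarrow> dl i \<in> model_carrier t"
  by (auto simp: dl_def model_carrier_def rng_def)

lemma br_carrier: "model_br t u v \<in> model_carrier t"
  by (auto simp: model_br_def model_carrier_def)

lemma fin_rng[simp]: "finite (rng t)"
  by (simp add: rng_def)

lemma br_out: assumes "k \<notin> rng t" shows "model_br t u v k = 0"
  using assms by (auto simp: model_br_def rng_def)

lemma sum_pick:
  fixes f g :: "nat \<Rightarrow> complex"
  assumes "finite A" "\<And>l. l \<in> A \<Longrightarrow> g l = (if l = p then c else 0)"
  shows "(\<Sum>l\<in>A. f l * g l) = (if p \<in> A then f p * c else 0)"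
proof -
  have "(\<Sum>l\<in>A. f l * g l) = (\<Sum>l\<in>A. if l = p then f p * c else 0)"
    by (rule sum.cong) (auto simp: assms)
  also have "\<dots> = (if p \<in> A then f p * c else 0)"
    using assms(1) by (simp add: sum.delta)
  finally show ?thesis .
qed

lemma br_dl_right:
  assumes "j \<in> rng t" "k \<in> rng t"
  shows "model_br t u (dl j) k = (\<Sum>i\<in>rng t. u i * model_sc t i j k)"
proof -
  have "model_br t u (dl j) k = (\<Sum>i\<in>rng t. \<Sum>j'\<in>rng t. u i * dl j j' * model_sc t i j' k)"
    using assms by (simp add: model_br_def rng_def)
  also have "\<dots> = (\<Sum>i\<in>rng t. u i * model_sc t i j k)"
  proof (rule sum.cong[OF refl])
    fix i assume "i \<in> rng t"
    have "(\<Sum>j'\<in>rng t. u i * dl j j' * model_sc t i j' k) = (\<Sum>j'\<in>rng t. (u i * model_sc t i j' k) * dl j j')"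
      by (simp add: mult_ac)
    also have "\<dots> = u i * model_sc t i j k"
      by (subst sum_pick[where p = j and c = 1]) (auto simp: dl_def assms)
    finally show "(\<Sum>j'\<in>rng t. u i * dl j j' * model_sc t i j' k) = u i * model_sc t i j k" .
  qed
  finally show ?thesis .
qed

lemma br_dl_left:
  assumes "i \<in> rng t" "k \<in> rng t"
  shows "model_br t (dl i) v k = (\<Sum>j\<in>rng t. v j * model_sc t i j k)"
proof -
  have "model_br t (dl i) v k = (\<Sum>i'\<in>rng t. \<Sum>j\<in>rng t. dl i i' * v j * model_sc t i' j k)"
    using assms by (simp add: model_br_def rng_def)
  also have "\<dots> = (\<Sum>i'\<in>rng t. (\<Sum>j\<in>rng t. v j * model_sc t i' j k) * dl i i')"
    by (simp add: sum_distrib_right sum_distrib_left mult_ac)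
  also have "\<dots> = (\<Sum>j\<in>rng t. v j * model_sc t i j k)"
    by (subst sum_pick[where p = i and c = 1]) (auto simp: dl_def assms)
  finally show ?thesis .
qed

lemma br_dl_dl: "model_br t (dl i) (dl j) k = (if k \<in> rng t \<and> i \<in> rng t \<and> j \<in> rng t then model_sc t i j k else 0)"
proof (cases "k \<in> rng t")
  case True
  show ?thesis
  proof (cases "i \<in> rng t \<and> j \<in> rng t")
    case True2: True
    then show ?thesis using True
      by (simp add: br_dl_right, subst mult.commute, subst sum_pick[where p = i and c = 1])
         (auto simp: dl_def)
  next
    case False
    have "model_br t (dl i) (dl j) k = (\<Sum>i'\<in>rng t. \<Sum>j'\<in>rng t. dl i i' * dl j j' * model_sc t i' j' k)"
      using True by (simp add: model_br_def rng_def)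
    also have "\<dots> = 0"
      by (rule sum.neutral, intro ballI, rule sum.neutral) (use False in \<open>auto simp: dl_def\<close>)
    finally show ?thesis using False by auto
  qed
qed (simp add: br_out)

lemma wn_eq: "nil_valid t \<Longrightarrow> i \<in> rng t \<Longrightarrow> j \<in> rng t \<Longrightarrow> wn t i = wn t j \<Longrightarrow> i = j"
  using wn_inj by (metis inj_on_def)

lemma br_dl_single:
  assumes "nil_valid t" "p \<in> rng t" "q \<in> rng t" "r \<in> rng t" "model_sc t p q r \<noteq> 0"
  shows "model_br t (dl p) (dl q) = (\<lambda>k. model_sc t p q r * dl r k)"
proof
  fix k
  show "model_br t (dl p) (dl q) k = model_sc t p q r * dl r k"
  proof (cases "k \<in> rng t")
    case False
    then have "dl r k = 0" using assms by (auto simp: dl_def)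
    then show ?thesis using False by (simp add: br_dl_dl)
  next
    case True
    show ?thesis
    proof (cases "k = r")
      case False
      have "model_sc t p q k = 0"
      proof (rule ccontr)
        assume "model_sc t p q k \<noteq> 0"
        then have "wn t k = wn t r" using grading[OF assms(1-3) True] grading[OF assms(1-4) assms(5)] by simp
        then show False using wn_eq[OF assms(1) True assms(4)] False by simp
      qed
      moreover have "dl r k = 0" using False by (simp add: dl_def)
      ultimately show ?thesis using True assms by (simp add: br_dl_dl)
    qed (use True assms in \<open>simp add: br_dl_dl, simp add: dl_def\<close>)
  qed
qed

definition der_on :: "nil_type \<Rightarrow> ((nat \<Rightarrow> complex) \<Rightarrow> (nat \<Rightarrow> complex)) \<Rightarrow> bool" where
  "der_on t D \<longleftrightarrow> (\<forall>u\<in>model_carrier t. D u \<in> model_carrier t) \<and>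
     (\<forall>u\<in>model_carrier t. \<forall>v\<in>model_carrier t. D (\<lambda>k. u k + v k) = (\<lambda>k. D u k + D v k)) \<and>
     (\<forall>c. \<forall>u\<in>model_carrier t. D (\<lambda>k. c * u k) = (\<lambda>k. c * D u k)) \<and>
     (\<forall>u\<in>model_carrier t. \<forall>v\<in>model_carrier t.
        D (model_br t u v) = (\<lambda>k. model_br t (D u) v k + model_br t u (D v) k))"

lemma eqn:
  assumes D: "der_on t D" and v: "nil_valid t" and r: "p \<in> rng t" "q \<in> rng t" "r \<in> rng t" "k \<in> rng t"
    and sc: "model_sc t p q r \<noteq> 0"
  shows "model_sc t p q r * D (dl r) k =
    (\<Sum>l\<in>rng t. D (dl p) l * model_sc t l q k) + (\<Sum>l\<in>rng t. D (dl q) l * model_sc t p l k)"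
proof -
  have "D (model_br t (dl p) (dl q)) = (\<lambda>k. model_br t (D (dl p)) (dl q) k + model_br t (dl p) (D (dl q)) k)"
    using D r by (simp add: der_on_def dl_carrier)
  moreover have "D (model_br t (dl p) (dl q)) = (\<lambda>k. model_sc t p q r * D (dl r) k)"
    using D r by (simp add: br_dl_single[OF v r(1-3) sc] der_on_def dl_carrier)
  ultimately have "model_sc t p q r * D (dl r) k = model_br t (D (dl p)) (dl q) k + model_br t (dl p) (D (dl q)) k"
    by metis
  then show ?thesis using r by (simp add: br_dl_right[OF r(2,4)] br_dl_left[OF r(1,4)])
qed

lemma eqn2:
  assumes D: "der_on t D" and v: "nil_valid t" and r: "p \<in> rng t" "q \<in> rng t" "r \<in> rng t" "k \<in> rng t"
    and sc: "model_sc t p q r = c" "c \<noteq> 0"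
    and s1: "\<forall>l\<in>rng t. model_sc t l q k = (if l = l1 then c1 else 0)"
    and s2: "\<forall>l\<in>rng t. model_sc t p l k = (if l = l2 then c2 else 0)"
  shows "c * D (dl r) k = (if l1 \<in> rng t then D (dl p) l1 * c1 else 0) + (if l2 \<in> rng t then D (dl q) l2 * c2 else 0)"
  using eqn[OF D v r] sc sum_pick[of "rng t" "\<lambda>l. model_sc t l q k" l1 c1 "D (dl p)"]
    sum_pick[of "rng t" "\<lambda>l. model_sc t p l k" l2 c2 "D (dl q)"] s1 s2
  by simp

definition good :: "nil_type \<Rightarrow> ((nat \<Rightarrow> complex) \<Rightarrow> (nat \<Rightarrow> complex)) \<Rightarrow> complex \<Rightarrow> nat \<Rightarrow> bool" where
  "good t D a i \<longleftrightarrow> (\<forall>k\<in>rng t. wn t k \<le> wn t i \<longrightarrow> D (dl i) k = (if k = i then a * of_nat (wn t i) else 0))"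

lemma chain:
  assumes D: "der_on t D" and v: "nil_valid t" and r: "p \<in> rng t" "q \<in> rng t" "r \<in> rng t"
    and sc: "model_sc t p q r \<noteq> 0" and gp: "good t D a p" and gq: "good t D a q"
  shows "good t D a r"
  unfolding good_def
proof (intro ballI impI)
  fix k assume k: "k \<in> rng t" "wn t k \<le> wn t r"
  have wr: "wn t r = wn t p + wn t q" using grading[OF v r sc] .
  have S1: "(\<Sum>l\<in>rng t. D (dl p) l * model_sc t l q k) = (\<Sum>l\<in>rng t. (a * of_nat (wn t p) * model_sc t p q k) * dl p l)"
  proof (rule sum.cong[OF refl])
    fix l assume l: "l \<in> rng t"
    show "D (dl p) l * model_sc t l q k = (a * of_nat (wn t p) * model_sc t p q k) * dl p l"
    proof (cases "l = p")
      case True then show ?thesis using gp l by (simp add: good_def dl_def)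
    next
      case False
      show ?thesis
      proof (cases "model_sc t l q k = 0")
        case nz: False
        have "wn t k = wn t l + wn t q" using grading[OF v l r(2) k(1) nz] .
        then have "wn t l \<le> wn t p" using k wr by simp
        then show ?thesis using gp l False by (simp add: good_def dl_def)
      qed (simp add: dl_def False)
    qed
  qed
  have S2: "(\<Sum>l\<in>rng t. D (dl q) l * model_sc t p l k) = (\<Sum>l\<in>rng t. (a * of_nat (wn t q) * model_sc t p q k) * dl q l)"
  proof (rule sum.cong[OF refl])
    fix l assume l: "l \<in> rng t"
    show "D (dl q) l * model_sc t p l k = (a * of_nat (wn t q) * model_sc t p q k) * dl q l"
    proof (cases "l = q")
      case True then show ?thesis using gq l by (simp add: good_def dl_def)
    next
      case False
      show ?thesis
      proof (cases "model_sc t p l k = 0")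
        case nz: False
        have "wn t k = wn t p + wn t l" using grading[OF v r(1) l k(1) nz] .
        then have "wn t l \<le> wn t q" using k wr by simp
        then show ?thesis using gq l False by (simp add: good_def dl_def)
      qed (simp add: dl_def False)
    qed
  qed
  have S1': "(\<Sum>l\<in>rng t. D (dl p) l * model_sc t l q k) = a * of_nat (wn t p) * model_sc t p q k"
    by (subst S1, subst sum_pick[where p = p and c = 1]) (auto simp: dl_def r)
  have S2': "(\<Sum>l\<in>rng t. D (dl q) l * model_sc t p l k) = a * of_nat (wn t q) * model_sc t p q k"
    by (subst S2, subst sum_pick[where p = q and c = 1]) (auto simp: dl_def r)
  have e: "model_sc t p q r * D (dl r) k = a * of_nat (wn t r) * model_sc t p q k"
    using eqn[OF D v r k(1) sc] S1' S2' by (simp add: wr algebra_simps)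
  show "D (dl r) k = (if k = r then a * of_nat (wn t r) else 0)"
  proof (cases "k = r")
    case True then show ?thesis using e sc by simp
  next
    case False
    have "model_sc t p q k = 0"
    proof (rule ccontr)
      assume "model_sc t p q k \<noteq> 0"
      then have "wn t k = wn t r" using grading[OF v r(1,2) k(1)] wr by simp
      then show False using wn_eq[OF v k(1) r(3)] False by simp
    qed
    then show ?thesis using e sc False by simp
  qed
qed




lemma der_G3:
  assumes D: "der_on (G3 n) D" and n: "7 \<le> n"
  shows "\<forall>i\<in>rng (G3 n). good (G3 n) D (D (dl 1) 1) i"
proof -
  have v: "nil_valid (G3 n)" using n by simp
  have R: "rng (G3 n) = {1..n}" by (simp add: rng_def)
  have E: "\<And>p q r k c l1 c1 l2 c2 X. p \<in> {1..n} \<Longrightarrow> q \<in> {1..n} \<Longrightarrow> r \<in> {1..n} \<Longrightarrow> k \<in> {1..n} \<Longrightarrow>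
     model_sc (G3 n) p q r = c \<Longrightarrow> c \<noteq> 0 \<Longrightarrow>
     \<forall>l\<in>{1..n}. model_sc (G3 n) l q k = (if l = l1 then c1 else 0) \<Longrightarrow>
     \<forall>l\<in>{1..n}. model_sc (G3 n) p l k = (if l = l2 then c2 else 0) \<Longrightarrow>
     X = (if l1 \<in> {1..n} then D (dl p) l1 * c1 else 0) + (if l2 \<in> {1..n} then D (dl q) l2 * c2 else 0) \<Longrightarrow>
     c * D (dl r) k = X"
    using eqn2[OF D v] unfolding R by blast
  define a where "a = D (dl 1) 1"
  note U = model_sc_def up_g3_def
  have e1: "1 * D (dl 3) 2 = 0" by (rule E[of 1 2 _ _ _ 0 0 0 0]) (use n in \<open>auto simp: U\<close>)
  have e2: "1 * D (dl 3) 3 = D (dl 1) 1 * 1 + D (dl 2) 2 * 1" by (rule E[of 1 2 _ _ _ 1 1 2 1]) (use n in \<open>auto simp: U\<close>)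
  have e3: "1 * D (dl 3) n = 0" by (rule E[of 1 2 _ _ _ 0 0 0 0]) (use n in \<open>auto simp: U\<close>)
  have e4: "1 * D (dl 4) 2 = 0" by (rule E[of 1 3 _ _ _ 0 0 0 0]) (use n in \<open>auto simp: U\<close>)
  have e5: "1 * D (dl 4) 3 = D (dl 3) 2 * 1" by (rule E[of 1 3 _ _ _ 0 0 2 1]) (use n in \<open>auto simp: U\<close>)
  have e6: "1 * D (dl 4) 4 = D (dl 1) 1 * 1 + D (dl 3) 3 * 1" by (rule E[of 1 3 _ _ _ 1 1 3 1]) (use n in \<open>auto simp: U\<close>)
  have e7: "1 * D (dl 5) 3 = D (dl 4) 2 * 1" by (rule E[of 1 4 _ _ _ 0 0 2 1]) (use n in \<open>auto simp: U\<close>)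
  have e8: "1 * D (dl 5) 4 = D (dl 4) 3 * 1" by (rule E[of 1 4 _ _ _ 0 0 3 1]) (use n in \<open>auto simp: U\<close>)
  have e9: "1 * D (dl 5) 5 = D (dl 1) 1 * 1 + D (dl 4) 4 * 1" by (rule E[of 1 4 _ _ _ 1 1 4 1]) (use n in \<open>auto simp: U\<close>)
  have e10: "1 * D (dl 6) 4 = D (dl 5) 3 * 1" by (rule E[of 1 5 _ _ _ 0 0 3 1]) (use n in \<open>auto simp: U\<close>)
  have e11: "1 * D (dl 6) 5 = D (dl 5) 4 * 1" by (rule E[of 1 5 _ _ _ 0 0 4 1]) (use n in \<open>auto simp: U\<close>)
  have e12: "1 * D (dl 6) 6 = D (dl 1) 1 * 1 + D (dl 5) 5 * 1" by (rule E[of 1 5 _ _ _ 1 1 5 1]) (use n in \<open>auto simp: U\<close>)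
  have e13: "1 * D (dl 4) 3 = D (dl n) 1 * -1" by (rule E[of 2 n _ _ _ 0 0 1 "-1"]) (use n in \<open>auto simp: U\<close>)
  have e14: "1 * D (dl 4) 4 = D (dl 2) 2 * 1 + D (dl n) n * 1" by (rule E[of 2 n _ _ _ 2 1 n 1]) (use n in \<open>auto simp: U\<close>)
  have e15: "1 * D (dl 6) 4 = D (dl 2) 1 * 1 + D (dl 3) n * 1" by (rule E[of 2 3 _ _ _ 1 1 n 1]) (use n in \<open>auto simp: U\<close>)
  have e16: "1 * D (dl 6) 5 = D (dl 2) n * -1" by (rule E[of 2 3 _ _ _ n "-1" 0 0]) (use n in \<open>auto simp: U\<close>)
  have e17: "1 * D (dl 6) 6 = D (dl 2) 2 * 1 + D (dl 3) 3 * 1" by (rule E[of 2 3 _ _ _ 2 1 3 1]) (use n in \<open>auto simp: U\<close>)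
  have d21: "D (dl 2) 1 = 0" using e1 e3 e4 e7 e10 e15 by simp
  have d2n: "D (dl 2) n = 0" using e1 e5 e8 e11 e16 by simp
  have dn1: "D (dl n) 1 = 0" using e1 e5 e13 by simp
  have d22: "D (dl 2) 2 = 3 * a" using e2 e6 e9 e12 e17 unfolding a_def by (simp add: algebra_simps)
  have dnn: "D (dl n) n = 2 * a" using e2 e6 e14 d22 unfolding a_def by (simp add: algebra_simps)
  have g1: "good (G3 n) D a 1"
    unfolding good_def using wn_pos[OF v] by (auto simp: a_def R)
  have g2: "good (G3 n) D a 2"
    unfolding good_def using n d21 d2n d22 by (auto simp: R split: if_splits)
  have gn: "good (G3 n) D a n"
    unfolding good_def using n dn1 dnn by (auto simp: R split: if_splits)
  have gi: "\<And>i. 2 \<le> i \<Longrightarrow> i \<le> n - 1 \<Longrightarrow> good (G3 n) D a i"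
  proof -
    fix i assume "2 \<le> i" "i \<le> n - 1"
    then show "good (G3 n) D a i"
    proof (induction i rule: dec_induct)
      case base show ?case by (rule g2)
    next
      case (step i)
      have "model_sc (G3 n) 1 i (Suc i) \<noteq> 0" using step n by (simp add: U)
      then show ?case using chain[OF D v, of 1 i "Suc i" a] step g1 n by (simp add: R)
    qed
  qed
  show ?thesis unfolding a_def[symmetric] R
  proof
    fix i assume i: "i \<in> {1..n}"
    show "good (G3 n) D a i"
    proof (cases "i = 1")
      case True then show ?thesis using g1 by simp
    next
      case False
      then show ?thesis using gn gi i by (cases "i = n") auto
    qed
  qed
qed


lemma der_conc:
  assumes D: "der_on t D" and tt: "t = G1_7 \<or> t = G2_9 \<or> t = G3_11"
  shows "\<forall>i\<in>rng t. good t D (D (dl 1) 1) i"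
proof -
  have v: "nil_valid t" using tt by auto
  define m where "m = model_dim t"
  have m: "m = 7 \<or> m = 9 \<or> m = 11" using tt by (auto simp: m_def)
  have R: "rng t = {1..m}" by (simp add: rng_def m_def)
  have W: "\<And>i. wn t i = i" using tt by auto
  have E: "\<And>p q r k c l1 c1 l2 c2 X. p \<in> {1..m} \<Longrightarrow> q \<in> {1..m} \<Longrightarrow> r \<in> {1..m} \<Longrightarrow> k \<in> {1..m} \<Longrightarrow>
     model_sc t p q r = c \<Longrightarrow> c \<noteq> 0 \<Longrightarrow>
     \<forall>l\<in>{1..m}. model_sc t l q k = (if l = l1 then c1 else 0) \<Longrightarrow>
     \<forall>l\<in>{1..m}. model_sc t p l k = (if l = l2 then c2 else 0) \<Longrightarrow>
     X = (if l1 \<in> {1..m} then D (dl p) l1 * c1 else 0) + (if l2 \<in> {1..m} then D (dl q) l2 * c2 else 0) \<Longrightarrow>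
     c * D (dl r) k = X"
    using eqn2[OF D v] unfolding R by blast
  define a where "a = D (dl 1) 1"
  note U = model_sc_def up_g17_def up_g29_def up_g311_def
  have e1: "1 * D (dl 3) 2 = 0" by (rule E[of 1 2 _ _ _ 0 0 0 0]) (use tt m_def in \<open>auto simp: U\<close>)
  have e2: "1 * D (dl 4) 3 = D (dl 3) 2 * 1" by (rule E[of 1 3 _ _ _ 0 0 2 1]) (use tt m_def in \<open>auto simp: U\<close>)
  have e3: "1 * D (dl 5) 4 = D (dl 4) 3 * 1" by (rule E[of 1 4 _ _ _ 0 0 3 1]) (use tt m_def in \<open>auto simp: U\<close>)
  have e4: "1 * D (dl 5) 4 = D (dl 2) 1 * 1" by (rule E[of 2 3 _ _ _ 1 1 0 0]) (use tt m_def in \<open>auto simp: U\<close>)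
  have e5: "1 * D (dl 3) 3 = D (dl 1) 1 * 1 + D (dl 2) 2 * 1" by (rule E[of 1 2 _ _ _ 1 1 2 1]) (use tt m_def in \<open>auto simp: U\<close>)
  have e6: "1 * D (dl 4) 4 = D (dl 1) 1 * 1 + D (dl 3) 3 * 1" by (rule E[of 1 3 _ _ _ 1 1 3 1]) (use tt m_def in \<open>auto simp: U\<close>)
  have e7: "1 * D (dl 5) 5 = D (dl 1) 1 * 1 + D (dl 4) 4 * 1" by (rule E[of 1 4 _ _ _ 1 1 4 1]) (use tt m_def in \<open>auto simp: U\<close>)
  have e8: "1 * D (dl 5) 5 = D (dl 2) 2 * 1 + D (dl 3) 3 * 1" by (rule E[of 2 3 _ _ _ 2 1 3 1]) (use tt m_def in \<open>auto simp: U\<close>)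
  have d21: "D (dl 2) 1 = 0" using e1 e2 e3 e4 by simp
  have d22: "D (dl 2) 2 = 2 * a" using e5 e6 e7 e8 unfolding a_def by (simp add: algebra_simps)
  have g1: "good t D a 1"
    unfolding good_def using wn_pos[OF v] by (auto simp: a_def R W)
  have g2: "good t D a 2"
    unfolding good_def using d21 d22 by (auto simp: R W le_Suc_eq numeral_2_eq_2)
  have gi: "\<And>i. 2 \<le> i \<Longrightarrow> i \<le> m - 1 \<Longrightarrow> good t D a i"
  proof -
    fix i assume "2 \<le> i" "i \<le> m - 1"
    then show "good t D a i"
    proof (induction i rule: dec_induct)
      case base show ?case by (rule g2)
    next
      case (step i)
      have "model_sc t 1 i (Suc i) \<noteq> 0" using step tt m_def by (auto simp: U)
      then show ?case using chain[OF D v, of 1 i "Suc i" a] step g1 m by (auto simp: R)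
    qed
  qed
  have gm: "good t D a m"
  proof -
    have "model_sc t 2 (m - 2) m \<noteq> 0" using tt m_def by (auto simp: U)
    then show ?thesis using chain[OF D v, of 2 "m - 2" m a] gi[of "m - 2"] g2 m by (auto simp: R)
  qed
  show ?thesis unfolding a_def[symmetric] R
  proof
    fix i assume i: "i \<in> {1..m}"
    show "good t D a i"
    proof (cases "i = 1")
      case True then show ?thesis using g1 by simp
    next
      case False
      then show ?thesis using gm gi i by (cases "i = m") auto
    qed
  qed
qed

lemma der_all:
  assumes "der_on t D" "nil_valid t"
  shows "\<forall>i\<in>rng t. good t D (D (dl 1) 1) i"
proof (cases t)
  case (G3 n) then show ?thesis using der_G3 assms by auto
qed (use der_conc assms in auto)




definition nc :: "nil_type \<Rightarrow> nat \<Rightarrow> bool" where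
  "nc t i \<longleftrightarrow> (\<exists>h\<in>rng t. \<exists>r\<in>rng t. model_sc t i h r \<noteq> 0)"

lemma ncI: "h \<in> rng t \<Longrightarrow> r \<in> rng t \<Longrightarrow> model_sc t i h r \<noteq> 0 \<Longrightarrow> nc t i"
  unfolding nc_def by blast

lemma nc_low:
  assumes v: "nil_valid t" and i: "1 \<le> i" "i \<le> model_dim t - 2"
  shows "nc t i"
proof -
  have m: "model_dim t \<ge> 7" using v by (cases t) auto
  consider "i = 1" | "i = 2" | "3 \<le> i" using i by linarith
  then show ?thesis
  proof cases
    case 1
    show ?thesis by (rule ncI[of 2 t 3]) (use m 1 v in \<open>cases t; auto simp: rng_def model_sc_def up_g3_def up_g17_def up_g29_def up_g311_def\<close>)+
  next
    case 2
    show ?thesis by (rule ncI[of 1 t 3]) (use m 2 v in \<open>cases t; auto simp: rng_def model_sc_def up_g3_def up_g17_def up_g29_def up_g311_def\<close>)+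
  next
    case 3
    show ?thesis by (rule ncI[of 1 t "i+1"]) (use m 3 i v in \<open>cases t; auto simp: rng_def model_sc_def up_g3_def up_g17_def up_g29_def up_g311_def\<close>)+
  qed
qed

lemma nc_prop:
  assumes v: "nil_valid t" and i: "i \<in> rng t"
  shows "nc t i \<or> (\<exists>p\<in>rng t. \<exists>q\<in>rng t. nc t p \<and> nc t q \<and> model_sc t p q i \<noteq> 0)"
proof -
  define m where "m = model_dim t"
  have m: "m \<ge> 7" using v by (cases t) (auto simp: m_def)
  have i': "1 \<le> i" "i \<le> m" using i by (auto simp: rng_def m_def)
  have n1: "nc t 1" "nc t 2" "nc t (m - 2)" using nc_low[OF v] m by (auto simp: m_def)
  consider "i \<le> m - 2" | "i = m - 1" | "i = m" using i' by linarith
  then show ?thesis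
  proof cases
    case 1 then show ?thesis using nc_low[OF v] i' m_def by auto
  next
    case 2
    have "model_sc t 1 (m - 2) i \<noteq> 0"
      using v m 2 by (cases t) (auto simp: m_def model_sc_def up_g3_def up_g17_def up_g29_def up_g311_def)
    moreover have "1 \<in> rng t" "m - 2 \<in> rng t" using m by (auto simp: rng_def m_def)
    ultimately show ?thesis using n1 by blast
  next
    case 3
    show ?thesis
    proof (cases t)
      case (G3 n)
      have "nc t n" by (rule ncI[of 2 t 4]) (use m 3 v G3 in \<open>auto simp: rng_def m_def model_sc_def up_g3_def\<close>)
      then show ?thesis using 3 G3 m_def by simp
    next
      case G1_7
      have "model_sc t 2 (m - 2) i \<noteq> 0" using 3 G1_7 by (simp add: m_def model_sc_def up_g17_def)
      moreover have "2 \<in> rng t" "m - 2 \<in> rng t" using m by (auto simp: rng_def m_def)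
      ultimately show ?thesis using n1 by blast
    next
      case G2_9
      have "model_sc t 2 (m - 2) i \<noteq> 0" using 3 G2_9 by (simp add: m_def model_sc_def up_g29_def)
      moreover have "2 \<in> rng t" "m - 2 \<in> rng t" using m by (auto simp: rng_def m_def)
      ultimately show ?thesis using n1 by blast
    next
      case G3_11
      have "model_sc t 2 (m - 2) i \<noteq> 0" using 3 G3_11 by (simp add: m_def model_sc_def up_g311_def)
      moreover have "2 \<in> rng t" "m - 2 \<in> rng t" using m by (auto simp: rng_def m_def)
      ultimately show ?thesis using n1 by blast
    qed
  qed
qed




definition lin_on :: "nil_type \<Rightarrow> ((nat \<Rightarrow> complex) \<Rightarrow> (nat \<Rightarrow> complex)) \<Rightarrow> bool" where
  "lin_on t D \<longleftrightarrow> (\<forall>u\<in>model_carrier t. D u \<in> model_carrier t) \<and>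
     (\<forall>u\<in>model_carrier t. \<forall>v\<in>model_carrier t. D (\<lambda>k. u k + v k) = (\<lambda>k. D u k + D v k)) \<and>
     (\<forall>c. \<forall>u\<in>model_carrier t. D (\<lambda>k. c * u k) = (\<lambda>k. c * D u k))"

lemma der_lin: "der_on t D \<Longrightarrow> lin_on t D"
  by (simp add: der_on_def lin_on_def)

lemma C_add: "u \<in> model_carrier t \<Longrightarrow> v \<in> model_carrier t \<Longrightarrow> (\<lambda>k. u k + v k) \<in> model_carrier t"
  by (simp add: model_carrier_def)
lemma C_scale: "u \<in> model_carrier t \<Longrightarrow> (\<lambda>k. c * u k) \<in> model_carrier t"
  by (simp add: model_carrier_def)
lemma C_diff: "u \<in> model_carrier t \<Longrightarrow> v \<in> model_carrier t \<Longrightarrow> (\<lambda>k. u k - v k) \<in> model_carrier t"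
  by (simp add: model_carrier_def)
lemma C_zero: "(\<lambda>k. 0) \<in> model_carrier t"
  by (simp add: model_carrier_def)
lemma C_sum: "(\<And>i. i \<in> S \<Longrightarrow> f i \<in> model_carrier t) \<Longrightarrow> (\<lambda>k. \<Sum>i\<in>S. c i * f i k) \<in> model_carrier t"
  by (simp add: model_carrier_def)
lemma C_out: "u \<in> model_carrier t \<Longrightarrow> k \<notin> rng t \<Longrightarrow> u k = 0"
  by (simp add: model_carrier_def rng_def)
lemma C_eqI: "u \<in> model_carrier t \<Longrightarrow> v \<in> model_carrier t \<Longrightarrow> (\<And>k. k \<in> rng t \<Longrightarrow> u k = v k) \<Longrightarrow> u = v"
  by (rule ext, metis C_out)

lemma lin_C: "lin_on t D \<Longrightarrow> u \<in> model_carrier t \<Longrightarrow> D u \<in> model_carrier t"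
  by (simp add: lin_on_def)
lemma lin_add: "lin_on t D \<Longrightarrow> u \<in> model_carrier t \<Longrightarrow> v \<in> model_carrier t \<Longrightarrow> D (\<lambda>k. u k + v k) = (\<lambda>k. D u k + D v k)"
  by (simp add: lin_on_def)
lemma lin_scale: "lin_on t D \<Longrightarrow> u \<in> model_carrier t \<Longrightarrow> D (\<lambda>k. c * u k) = (\<lambda>k. c * D u k)"
  by (simp add: lin_on_def)
lemma lin_zero: "lin_on t D \<Longrightarrow> D (\<lambda>k. 0) = (\<lambda>k. 0)"
  using lin_scale[of t D "\<lambda>k. 0" 0] C_zero by simp
lemma lin_diff: "lin_on t D \<Longrightarrow> u \<in> model_carrier t \<Longrightarrow> v \<in> model_carrier t \<Longrightarrow> D (\<lambda>k. u k - v k) = (\<lambda>k. D u k - D v k)"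
proof -
  assume l: "lin_on t D" and u: "u \<in> model_carrier t" and v: "v \<in> model_carrier t"
  have "D (\<lambda>k. u k - v k) = D (\<lambda>k. u k + (\<lambda>k. (-1) * v k) k)" by simp
  also have "\<dots> = (\<lambda>k. D u k + D (\<lambda>k. (-1) * v k) k)" by (rule lin_add[OF l u C_scale[OF v]])
  also have "\<dots> = (\<lambda>k. D u k - D v k)" using lin_scale[OF l v, of "-1"] by simp
  finally show ?thesis .
qed

lemma lin_sum:
  assumes l: "lin_on t D" and S: "finite S" and f: "\<And>i. i \<in> S \<Longrightarrow> f i \<in> model_carrier t"
  shows "D (\<lambda>k. \<Sum>i\<in>S. c i * f i k) = (\<lambda>k. \<Sum>i\<in>S. c i * D (f i) k)"
  using S f
proof (induction S rule: finite_induct)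
  case empty then show ?case using lin_zero[OF l] by simp
next
  case (insert x F)
  have "D (\<lambda>k. \<Sum>i\<in>insert x F. c i * f i k) = D (\<lambda>k. (\<lambda>k. c x * f x k) k + (\<lambda>k. \<Sum>i\<in>F. c i * f i k) k)"
    using insert by simp
  also have "\<dots> = (\<lambda>k. D (\<lambda>k. c x * f x k) k + D (\<lambda>k. \<Sum>i\<in>F. c i * f i k) k)"
    by (rule lin_add[OF l]) (use insert in \<open>auto intro!: C_scale C_sum\<close>)
  also have "\<dots> = (\<lambda>k. \<Sum>i\<in>insert x F. c i * D (f i) k)"
    using insert lin_scale[OF l, of "f x" "c x"] by simp
  finally show ?case .
qed

lemma expand_dl: "u \<in> model_carrier t \<Longrightarrow> u = (\<lambda>k. \<Sum>i\<in>rng t. u i * dl i k)"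
proof (rule ext)
  fix k assume u: "u \<in> model_carrier t"
  show "u k = (\<Sum>i\<in>rng t. u i * dl i k)"
  proof (cases "k \<in> rng t")
    case True
    then show ?thesis by (subst sum_pick[where p = k and c = 1]) (auto simp: dl_def)
  next
    case False
    then show ?thesis using C_out[OF u False] by (auto simp: dl_def intro!: sum.neutral)
  qed
qed

lemma lin_expand:
  assumes l: "lin_on t D" and u: "u \<in> model_carrier t"
  shows "D u = (\<lambda>k. \<Sum>i\<in>rng t. u i * D (dl i) k)"
proof -
  have "D u = D (\<lambda>k. \<Sum>i\<in>rng t. u i * dl i k)" using expand_dl[OF u] by simp
  also have "\<dots> = (\<lambda>k. \<Sum>i\<in>rng t. u i * D (dl i) k)" by (rule lin_sum[OF l]) (auto intro: dl_carrier)
  finally show ?thesis .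
qed

definition goodall :: "nil_type \<Rightarrow> ((nat \<Rightarrow> complex) \<Rightarrow> (nat \<Rightarrow> complex)) \<Rightarrow> bool" where
  "goodall t D \<longleftrightarrow> nil_valid t \<and> lin_on t D \<and> (\<forall>i\<in>rng t. good t D 1 i)"

lemma ga_low:
  assumes g: "goodall t D" and i: "i \<in> rng t" and k: "k \<in> rng t" "wn t k \<le> wn t i" "k \<noteq> i"
  shows "D (dl i) k = 0"
  using g i k by (auto simp: goodall_def good_def)

lemma ga_diag:
  assumes g: "goodall t D" and i: "i \<in> rng t"
  shows "D (dl i) i = of_nat (wn t i)"
  using g i by (auto simp: goodall_def good_def)

lemma EV0:
  assumes g: "goodall t D" and h: "h \<in> model_carrier t"
    and e: "D h = (\<lambda>k. of_nat s * h k)" and z: "\<forall>k\<in>rng t. wn t k = s \<longrightarrow> h k = 0"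
  shows "h = (\<lambda>k. 0)"
proof (rule ccontr)
  assume "h \<noteq> (\<lambda>k. 0)"
  then obtain k1 where "h k1 \<noteq> 0" by auto
  then have k1: "k1 \<in> rng t" "h k1 \<noteq> 0" using C_out[OF h] by auto
  define P where "P = (\<lambda>w. \<exists>k\<in>rng t. h k \<noteq> 0 \<and> wn t k = w)"
  have "P (wn t k1)" using k1 by (auto simp: P_def)
  then obtain w0 where w0: "P w0" "\<And>w. P w \<Longrightarrow> w0 \<le> w"
    by (metis Least_le LeastI)
  then obtain k0 where k0: "k0 \<in> rng t" "h k0 \<noteq> 0" "wn t k0 = w0" by (auto simp: P_def)
  have v: "nil_valid t" and l: "lin_on t D" using g by (auto simp: goodall_def)
  have "D h k0 = (\<Sum>i\<in>rng t. h i * D (dl i) k0)" using lin_expand[OF l h] by metis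
  also have "\<dots> = (\<Sum>i\<in>rng t. (of_nat (wn t k0) * h k0) * dl k0 i)"
  proof (rule sum.cong[OF refl])
    fix i assume i: "i \<in> rng t"
    show "h i * D (dl i) k0 = (of_nat (wn t k0) * h k0) * dl k0 i"
    proof (cases "i = k0")
      case True then show ?thesis using ga_diag[OF g k0(1)] by (simp add: dl_def)
    next
      case False
      show ?thesis
      proof (cases "h i = 0")
        case False2: False
        then have "P (wn t i)" using i by (auto simp: P_def)
        then have "wn t k0 \<le> wn t i" using w0 k0 by auto
        then have "D (dl i) k0 = 0" using ga_low[OF g i k0(1)] False by auto
        then show ?thesis using False by (simp add: dl_def)
      qed (use False in \<open>simp add: dl_def\<close>)
    qed
  qed
  also have "\<dots> = of_nat (wn t k0) * h k0"
    by (subst mult.commute, subst sum_pick[where p = k0 and c = 1]) (auto simp: dl_def k0)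
  finally have "of_nat s * h k0 = of_nat (wn t k0) * h k0" using e by metis
  then have "wn t k0 = s" using k0(2) by simp
  then show False using z k0 by auto
qed

lemma bound_w: "\<exists>B. \<forall>k\<in>rng t. wn t k \<le> B"
  by (rule exI[of _ "Max (wn t ` rng t)"]) auto

lemma eigen_exists:
  assumes g: "goodall t D" and i: "i \<in> rng t"
  shows "\<exists>f. f \<in> model_carrier t \<and> f i = 1 \<and> (\<forall>k\<in>rng t. wn t k \<le> wn t i \<and> k \<noteq> i \<longrightarrow> f k = 0) \<and>
             D f = (\<lambda>k. of_nat (wn t i) * f k)"
proof -
  have v: "nil_valid t" and l: "lin_on t D" using g by (auto simp: goodall_def)
  define Q where "Q = (\<lambda>T f. f \<in> model_carrier t \<and> f i = 1 \<and> (\<forall>k\<in>rng t. wn t k \<le> wn t i \<and> k \<noteq> i \<longrightarrow> f k = 0) \<and>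
             (\<forall>k\<in>rng t. wn t k \<le> T \<longrightarrow> D f k = of_nat (wn t i) * f k))"
  have step: "\<exists>f. Q (wn t i + d) f" for d
  proof (induction d)
    case 0
    have "Q (wn t i) (dl i)"
      unfolding Q_def using dl_carrier[OF i] ga_low[OF g i] ga_diag[OF g i]
      by (auto simp: dl_def)
    then show ?case by auto
  next
    case (Suc d)
    then obtain f where f: "Q (wn t i + d) f" by auto
    show ?case
    proof (cases "\<exists>k0\<in>rng t. wn t k0 = wn t i + Suc d")
      case False
      have "Q (wn t i + Suc d) f"
        using f False unfolding Q_def by (metis add_Suc_right le_Suc_eq)
      then show ?thesis by auto
    next
      case True
      then obtain k0 where k0: "k0 \<in> rng t" "wn t k0 = wn t i + Suc d" by auto
      have fc: "f \<in> model_carrier t" using f by (simp add: Q_def)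
      define c where "c = (D f k0 - of_nat (wn t i) * f k0) / (of_nat (wn t k0) - of_nat (wn t i))"
      have ne: "(of_nat (wn t k0) :: complex) - of_nat (wn t i) \<noteq> 0"
      proof -
        have "wn t k0 \<noteq> wn t i" using k0 by simp
        then show ?thesis by (metis eq_iff_diff_eq_0 of_nat_eq_iff)
      qed
      define f' where "f' = (\<lambda>k. f k - (\<lambda>k. c * dl k0 k) k)"
      have f'c: "f' \<in> model_carrier t" unfolding f'_def by (intro C_diff fc C_scale dl_carrier k0)
      have Df': "D f' = (\<lambda>k. D f k - c * D (dl k0) k)"
        unfolding f'_def using lin_diff[OF l fc C_scale[OF dl_carrier[OF k0(1)]]] lin_scale[OF l dl_carrier[OF k0(1)]]
        by simp
      have k0i: "k0 \<noteq> i" using k0 by auto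
      have "Q (wn t i + Suc d) f'"
        unfolding Q_def
      proof (intro conjI ballI impI f'c)
        show "f' i = 1" using f k0i by (simp add: f'_def Q_def dl_def)
      next
        fix k assume "k \<in> rng t" "wn t k \<le> wn t i \<and> k \<noteq> i"
        then show "f' k = 0" using f k0 by (auto simp: f'_def Q_def dl_def)
      next
        fix k assume kr: "k \<in> rng t" and kT: "wn t k \<le> wn t i + Suc d"
        show "D f' k = of_nat (wn t i) * f' k"
        proof (cases "k = k0")
          case True
          have h1: "D f' k0 = D f k0 - c * of_nat (wn t k0)" using Df' ga_diag[OF g k0(1)] by simp
          have h2: "f' k0 = f k0 - c" by (simp add: f'_def dl_def)
          have h3: "c * (of_nat (wn t k0) - of_nat (wn t i)) = D f k0 - of_nat (wn t i) * f k0"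
            using ne unfolding c_def by simp
          show ?thesis unfolding True using h1 h2 h3 by algebra
        next
          case False
          then have kd: "wn t k \<le> wn t i + d" using kT k0 wn_eq[OF v kr k0(1)] by (metis add_Suc_right le_Suc_eq)
          have "D (dl k0) k = 0" using ga_low[OF g k0(1) kr] kd k0 False by simp
          moreover have "D f' k = D f k - c * D (dl k0) k" using Df' by simp
          moreover have "f' k = f k" using False by (simp add: f'_def dl_def)
          ultimately show ?thesis using f kr kd by (simp add: Q_def)
        qed
      qed
      then show ?thesis by auto
    qed
  qed
  obtain B where B: "\<forall>k\<in>rng t. wn t k \<le> B" using bound_w by auto
  obtain f where f: "Q (wn t i + B) f" using step by auto
  have fc: "f \<in> model_carrier t" using f by (simp add: Q_def)
  have "D f = (\<lambda>k. of_nat (wn t i) * f k)"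
    by (rule C_eqI[OF lin_C[OF l fc] C_scale[OF fc]]) (use f B in \<open>force simp: Q_def\<close>)
  then show ?thesis using f by (auto simp: Q_def)
qed




lemma br_scale_left: "model_br t (\<lambda>k. c * u k) v = (\<lambda>k. c * model_br t u v k)"
  by (auto simp: model_br_def sum_distrib_left mult_ac)
lemma br_scale_right: "model_br t u (\<lambda>k. c * v k) = (\<lambda>k. c * model_br t u v k)"
  by (auto simp: model_br_def sum_distrib_left mult_ac)
lemma br_add_left: "model_br t (\<lambda>k. u k + u' k) v = (\<lambda>k. model_br t u v k + model_br t u' v k)"
  by (auto simp: model_br_def sum.distrib algebra_simps)
lemma br_add_right: "model_br t u (\<lambda>k. v k + v' k) = (\<lambda>k. model_br t u v k + model_br t u v' k)"
  by (auto simp: model_br_def sum.distrib algebra_simps)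
lemma br_antisym: "model_br t u v = (\<lambda>k. - model_br t v u k)"
proof (rule ext)
  fix k
  have "(\<Sum>i\<in>{1..model_dim t}. \<Sum>j\<in>{1..model_dim t}. u i * v j * model_sc t i j k) =
        (\<Sum>j\<in>{1..model_dim t}. \<Sum>i\<in>{1..model_dim t}. u i * v j * model_sc t i j k)"
    by (rule sum.swap)
  also have "\<dots> = - (\<Sum>i\<in>{1..model_dim t}. \<Sum>j\<in>{1..model_dim t}. v i * u j * model_sc t i j k)"
  proof -
    have "\<And>i j. u i * v j * model_sc t i j k = - (v j * u i * model_sc t j i k)"
      using sc_antisym[of t] by (metis mult.commute mult_minus_right)
    then show ?thesis by (simp add: sum_negf[symmetric])
  qed
  finally show "model_br t u v k = - model_br t v u k" by (simp add: model_br_def)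
qed
lemma br_self: "model_br t u u = (\<lambda>k. 0)"
proof (rule ext)
  fix k
  have "model_br t u u k = - model_br t u u k" by (subst br_antisym) simp
  then have "2 * model_br t u u k = 0" by simp
  then show "model_br t u u k = 0" by simp
qed

definition fb :: "nil_type \<Rightarrow> ((nat \<Rightarrow> complex) \<Rightarrow> (nat \<Rightarrow> complex)) \<Rightarrow> (nat \<Rightarrow> nat \<Rightarrow> complex) \<Rightarrow> bool" where
  "fb t D F \<longleftrightarrow> (\<forall>i\<in>rng t. F i \<in> model_carrier t \<and> F i i = 1 \<and>
      (\<forall>k\<in>rng t. wn t k \<le> wn t i \<and> k \<noteq> i \<longrightarrow> F i k = 0) \<and> D (F i) = (\<lambda>k. of_nat (wn t i) * F i k))"

lemma fb_exists: "goodall t D \<Longrightarrow> \<exists>F. fb t D F"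
  using eigen_exists[of t D] unfolding fb_def by metis

lemma fbC: "fb t D F \<Longrightarrow> i \<in> rng t \<Longrightarrow> F i \<in> model_carrier t" by (simp add: fb_def)
lemma fb1: "fb t D F \<Longrightarrow> i \<in> rng t \<Longrightarrow> F i i = 1" by (simp add: fb_def)
lemma fb0: "fb t D F \<Longrightarrow> i \<in> rng t \<Longrightarrow> k \<in> rng t \<Longrightarrow> wn t k \<le> wn t i \<Longrightarrow> k \<noteq> i \<Longrightarrow> F i k = 0" by (simp add: fb_def)
lemma fbD: "fb t D F \<Longrightarrow> i \<in> rng t \<Longrightarrow> D (F i) = (\<lambda>k. of_nat (wn t i) * F i k)" by (simp add: fb_def)

lemma fb_nz: "fb t D F \<Longrightarrow> i \<in> rng t \<Longrightarrow> a \<in> rng t \<Longrightarrow> F i a \<noteq> 0 \<Longrightarrow> a = i \<or> wn t a > wn t i"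
  using fb0[of t D F i a] by force

lemma F_indep:
  assumes g: "goodall t D" and f: "fb t D F" and z: "(\<lambda>k. \<Sum>i\<in>rng t. c i * F i k) = (\<lambda>k. 0)"
  shows "\<forall>i\<in>rng t. c i = 0"
proof (rule ccontr)
  assume "\<not> (\<forall>i\<in>rng t. c i = 0)"
  then obtain i1 where i1: "i1 \<in> rng t" "c i1 \<noteq> 0" by auto
  define P where "P = (\<lambda>w. \<exists>i\<in>rng t. c i \<noteq> 0 \<and> wn t i = w)"
  have "P (wn t i1)" using i1 by (auto simp: P_def)
  then obtain w0 where w0: "P w0" "\<And>w. P w \<Longrightarrow> w0 \<le> w" by (metis Least_le LeastI)
  then obtain i0 where i0: "i0 \<in> rng t" "c i0 \<noteq> 0" "wn t i0 = w0" by (auto simp: P_def)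
  have v: "nil_valid t" using g by (simp add: goodall_def)
  have "0 = (\<Sum>i\<in>rng t. c i * F i i0)" using z by metis
  also have "\<dots> = (\<Sum>i\<in>rng t. c i0 * dl i0 i)"
  proof (rule sum.cong[OF refl])
    fix i assume i: "i \<in> rng t"
    show "c i * F i i0 = c i0 * dl i0 i"
    proof (cases "i = i0")
      case True then show ?thesis using fb1[OF f i0(1)] by (simp add: dl_def)
    next
      case False
      show ?thesis
      proof (cases "c i = 0")
        case False2: False
        then have "w0 \<le> wn t i" using w0 i by (auto simp: P_def)
        then have "F i i0 = 0" using fb0[OF f i i0(1)] i0 False by auto
        then show ?thesis using False by (simp add: dl_def)
      qed (use False in \<open>simp add: dl_def\<close>)
    qed
  qed
  also have "\<dots> = c i0" by (subst sum_pick[where p = i0 and c = 1]) (auto simp: dl_def i0)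
  finally show False using i0 by simp
qed

lemma F_span:
  assumes g: "goodall t D" and f: "fb t D F" and u: "u \<in> model_carrier t"
  shows "\<exists>c. u = (\<lambda>k. \<Sum>i\<in>rng t. c i * F i k)"
proof -
  have v: "nil_valid t" using g by (simp add: goodall_def)
  have step: "\<exists>c. \<forall>k\<in>rng t. wn t k \<le> T \<longrightarrow> u k = (\<Sum>i\<in>rng t. c i * F i k)" for T
  proof (induction T)
    case 0
    have "\<forall>k\<in>rng t. \<not> wn t k \<le> 0" using wn_pos[OF v] by (metis not_one_le_zero le_zero_eq)
    then show ?case by blast
  next
    case (Suc T)
    then obtain c where c: "\<forall>k\<in>rng t. wn t k \<le> T \<longrightarrow> u k = (\<Sum>i\<in>rng t. c i * F i k)" by auto
    show ?case
    proof (cases "\<exists>k0\<in>rng t. wn t k0 = Suc T")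
      case False
      then show ?thesis using c by (metis le_Suc_eq)
    next
      case True
      then obtain k0 where k0: "k0 \<in> rng t" "wn t k0 = Suc T" by auto
      define e where "e = u k0 - (\<Sum>i\<in>rng t. c i * F i k0)"
      define c' where "c' = (\<lambda>i. c i + e * dl k0 i)"
      have sp: "(\<Sum>i\<in>rng t. c' i * F i k) = (\<Sum>i\<in>rng t. c i * F i k) + e * F k0 k" for k
      proof -
        have "(\<Sum>i\<in>rng t. c' i * F i k) = (\<Sum>i\<in>rng t. c i * F i k) + (\<Sum>i\<in>rng t. (e * F i k) * dl k0 i)"
          by (simp add: c'_def algebra_simps sum.distrib)
        also have "(\<Sum>i\<in>rng t. (e * F i k) * dl k0 i) = e * F k0 k"
          by (subst sum_pick[where p = k0 and c = 1]) (auto simp: dl_def k0)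
        finally show ?thesis .
      qed
      have "\<forall>k\<in>rng t. wn t k \<le> Suc T \<longrightarrow> u k = (\<Sum>i\<in>rng t. c' i * F i k)"
      proof (intro ballI impI)
        fix k assume k: "k \<in> rng t" "wn t k \<le> Suc T"
        show "u k = (\<Sum>i\<in>rng t. c' i * F i k)"
        proof (cases "k = k0")
          case True then show ?thesis using sp fb1[OF f k0(1)] by (simp add: e_def)
        next
          case False
          then have "wn t k \<le> T" using k k0 wn_eq[OF v k(1) k0(1)] by (metis le_Suc_eq)
          moreover have "F k0 k = 0" using fb0[OF f k0(1) k(1)] k k0 False by simp
          ultimately show ?thesis using sp c k by simp
        qed
      qed
      then show ?thesis by auto
    qed
  qed
  obtain B where B: "\<forall>k\<in>rng t. wn t k \<le> B" using bound_w by auto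
  obtain c where c: "\<forall>k\<in>rng t. wn t k \<le> B \<longrightarrow> u k = (\<Sum>i\<in>rng t. c i * F i k)" using step by auto
  have "u = (\<lambda>k. \<Sum>i\<in>rng t. c i * F i k)"
    by (rule C_eqI[OF u C_sum]) (use c B fbC[OF f] in auto)
  then show ?thesis by auto
qed

lemma F_sum_single:
  assumes f: "fb t D F" and v: "nil_valid t" and i: "i \<in> rng t" "j \<in> rng t" and k: "k \<in> rng t" and wk: "wn t k = wn t i + wn t j"
  shows "(\<Sum>l\<in>rng t. model_sc t i j l * F l k) = model_sc t i j k"
proof -
  have "(\<Sum>l\<in>rng t. model_sc t i j l * F l k) = (\<Sum>l\<in>rng t. model_sc t i j k * dl k l)"
  proof (rule sum.cong[OF refl])
    fix l assume l: "l \<in> rng t"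
    show "model_sc t i j l * F l k = model_sc t i j k * dl k l"
    proof (cases "l = k")
      case True then show ?thesis using fb1[OF f l] by (simp add: dl_def)
    next
      case False
      show ?thesis
      proof (cases "model_sc t i j l = 0")
        case False2: False
        have "F l k = 0"
        proof (rule ccontr)
          assume "F l k \<noteq> 0"
          then have "k = l \<or> wn t k > wn t l" using fb_nz[OF f l k] by simp
          moreover have "wn t l = wn t i + wn t j" using grading[OF v i l False2] .
          ultimately show False using False wk by auto
        qed
        then show ?thesis using False by (simp add: dl_def)
      qed (use False in \<open>simp add: dl_def\<close>)
    qed
  qed
  also have "\<dots> = model_sc t i j k" by (subst sum_pick[where p = k and c = 1]) (auto simp: dl_def k)
  finally show ?thesis .
qed




lemma F_sum_pick:
  assumes f: "fb t D F" and v: "nil_valid t" and p: "p \<in> rng t" "q \<in> rng t" "i \<in> rng t"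
    and sc: "model_sc t p q i \<noteq> 0"
  shows "(\<lambda>k. \<Sum>l\<in>rng t. model_sc t p q l * F l k) = (\<lambda>k. model_sc t p q i * F i k)"
proof (rule ext)
  fix k
  have "(\<Sum>l\<in>rng t. model_sc t p q l * F l k) = (\<Sum>l\<in>rng t. F l k * model_sc t p q l)" by (simp add: mult_ac)
  also have "\<dots> = F i k * model_sc t p q i"
  proof (subst sum_pick[where p = i and c = "model_sc t p q i"])
    show "finite (rng t)" by simp
    fix l assume l: "l \<in> rng t"
    show "model_sc t p q l = (if l = i then model_sc t p q i else 0)"
    proof (cases "l = i")
      case False
      have "model_sc t p q l = 0"
      proof (rule ccontr)
        assume "model_sc t p q l \<noteq> 0"
        then have "wn t l = wn t i" using grading[OF v p(1,2) l] grading[OF v p sc] by simp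
        then show False using wn_eq[OF v l p(3)] False by simp
      qed
      then show ?thesis using False by simp
    qed simp
  qed (use p in simp)
  finally show "(\<Sum>l\<in>rng t. model_sc t p q l * F l k) = model_sc t p q i * F i k" by (simp add: mult_ac)
qed

lemma F_br:
  assumes g: "goodall t D" and d: "der_on t D" and f: "fb t D F" and i: "i \<in> rng t" "j \<in> rng t"
  shows "model_br t (F i) (F j) = (\<lambda>k. \<Sum>l\<in>rng t. model_sc t i j l * F l k)"
proof -
  have v: "nil_valid t" and l: "lin_on t D" using g by (auto simp: goodall_def)
  define s where "s = wn t i + wn t j"
  define G where "G = model_br t (F i) (F j)"
  define T where "T = (\<lambda>k. \<Sum>l\<in>rng t. model_sc t i j l * F l k)"
  have Gc: "G \<in> model_carrier t" by (simp add: G_def br_carrier)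
  have Tc: "T \<in> model_carrier t" unfolding T_def by (rule C_sum) (use fbC[OF f] in auto)
  have DG: "D G = (\<lambda>k. of_nat s * G k)"
  proof -
    have "D G = (\<lambda>k. model_br t (D (F i)) (F j) k + model_br t (F i) (D (F j)) k)"
      using d fbC[OF f i(1)] fbC[OF f i(2)] by (simp add: der_on_def G_def)
    also have "\<dots> = (\<lambda>k. of_nat s * G k)"
      unfolding fbD[OF f i(1)] fbD[OF f i(2)] br_scale_left br_scale_right G_def s_def
      by (simp add: algebra_simps)
    finally show ?thesis .
  qed
  have DT: "D T = (\<lambda>k. of_nat s * T k)"
  proof -
    have "D T = (\<lambda>k. \<Sum>l\<in>rng t. model_sc t i j l * D (F l) k)"
      unfolding T_def by (rule lin_sum[OF l]) (use fbC[OF f] in auto)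
    also have "\<dots> = (\<lambda>k. \<Sum>l\<in>rng t. of_nat s * (model_sc t i j l * F l k))"
    proof (rule ext, rule sum.cong[OF refl])
      fix k l assume l: "l \<in> rng t"
      show "model_sc t i j l * D (F l) k = of_nat s * (model_sc t i j l * F l k)"
      proof (cases "model_sc t i j l = 0")
        case False
        then have "wn t l = s" using grading[OF v i l] by (simp add: s_def)
        then show ?thesis using fbD[OF f l] by simp
      qed simp
    qed
    also have "\<dots> = (\<lambda>k. of_nat s * T k)" by (simp add: T_def sum_distrib_left)
    finally show ?thesis .
  qed
  define h where "h = (\<lambda>k. G k - T k)"
  have hc: "h \<in> model_carrier t" unfolding h_def by (rule C_diff[OF Gc Tc])
  have Dh: "D h = (\<lambda>k. of_nat s * h k)"
    unfolding h_def by (simp add: lin_diff[OF l Gc Tc] DG DT algebra_simps)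
  have hz: "\<forall>k\<in>rng t. wn t k = s \<longrightarrow> h k = 0"
  proof (intro ballI impI)
    fix k assume k: "k \<in> rng t" and wk: "wn t k = s"
    have Tk: "T k = model_sc t i j k"
      unfolding T_def by (rule F_sum_single[OF f v i k]) (use wk s_def in simp)
    have "G k = (\<Sum>a\<in>rng t. \<Sum>b\<in>rng t. F i a * F j b * model_sc t a b k)"
      using k by (simp add: G_def model_br_def rng_def)
    also have "\<dots> = (\<Sum>a\<in>rng t. \<Sum>b\<in>rng t. if b = j then (if a = i then model_sc t i j k else 0) else 0)"
    proof (intro sum.cong refl)
      fix a b assume a: "a \<in> rng t" and b: "b \<in> rng t"
      show "F i a * F j b * model_sc t a b k = (if b = j then (if a = i then model_sc t i j k else 0) else 0)"
      proof (cases "a = i \<and> b = j")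
        case True then show ?thesis using fb1[OF f i(1)] fb1[OF f i(2)] by simp
      next
        case False
        show ?thesis
        proof (cases "F i a = 0 \<or> F j b = 0 \<or> model_sc t a b k = 0")
          case False2: False
          then have "wn t k = wn t a + wn t b" using grading[OF v a b k] by simp
          moreover have "a = i \<or> wn t a > wn t i" using fb_nz[OF f i(1) a] False2 by simp
          moreover have "b = j \<or> wn t b > wn t j" using fb_nz[OF f i(2) b] False2 by simp
          ultimately have "a = i \<and> b = j" using wk s_def by auto
          then show ?thesis using False by simp
        qed (use False in auto)
      qed
    qed
    also have "\<dots> = model_sc t i j k" using i by simp
    finally show "h k = 0" using Tk by (simp add: h_def)
  qed
  have "h = (\<lambda>k. 0)" by (rule EV0[OF g hc Dh hz])
  then have "G = T"
  proof -
    assume "h = (\<lambda>k. 0)"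
    then have "\<And>k. G k - T k = 0" by (simp add: h_def fun_eq_iff)
    then show "G = T" by (simp add: fun_eq_iff)
  qed
  then show ?thesis by (simp add: G_def T_def)
qed

lemma L_main:
  assumes g: "goodall t D" and d: "der_on t D" and f: "fb t D F" and Ld: "der_on t L"
    and ann: "\<forall>u\<in>model_carrier t. \<forall>w\<in>model_carrier t. model_br t w (\<lambda>k. D u k + L u k) = (\<lambda>k. 0)"
    and comm: "\<forall>u\<in>model_carrier t. L (D u) = D (L u)"
  shows "\<forall>i\<in>rng t. L (F i) = (\<lambda>k. - of_nat (wn t i) * F i k)"
proof -
  have v: "nil_valid t" and l: "lin_on t D" using g by (auto simp: goodall_def)
  have lL: "lin_on t L" using Ld by (rule der_lin)
  have A: "(\<lambda>k. D (F i) k + L (F i) k) = (\<lambda>k. (D (F i) i + L (F i) i) * F i k)" if i: "i \<in> rng t" for i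
  proof -
    define z where "z = (\<lambda>k. D (F i) k + L (F i) k)"
    have Fc: "F i \<in> model_carrier t" using fbC[OF f i] .
    have DFc: "D (F i) \<in> model_carrier t" using lin_C[OF l Fc] .
    have LFc: "L (F i) \<in> model_carrier t" using lin_C[OF lL Fc] .
    have zc: "z \<in> model_carrier t" unfolding z_def by (rule C_add[OF DFc LFc])
    have Dz: "D z = (\<lambda>k. of_nat (wn t i) * z k)"
    proof -
      have e1: "D z = (\<lambda>k. D (D (F i)) k + D (L (F i)) k)" unfolding z_def by (rule lin_add[OF l DFc LFc])
      have e2: "D (L (F i)) = L (D (F i))" using comm Fc by simp
      have e3: "L (D (F i)) = (\<lambda>k. of_nat (wn t i) * L (F i) k)"
        using lin_scale[OF lL Fc, of "of_nat (wn t i)"] fbD[OF f i] by simp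
      have e4: "D (D (F i)) = (\<lambda>k. of_nat (wn t i) * D (F i) k)"
        using lin_scale[OF l Fc, of "of_nat (wn t i)"] fbD[OF f i] by simp
      show ?thesis unfolding e1 e2 e3 e4 by (simp add: z_def algebra_simps)
    qed
    define h where "h = (\<lambda>k. z k - (\<lambda>k. z i * F i k) k)"
    have hc: "h \<in> model_carrier t" unfolding h_def by (rule C_diff[OF zc C_scale[OF Fc]])
    have Dh: "D h = (\<lambda>k. of_nat (wn t i) * h k)"
    proof -
      have q1: "D h = (\<lambda>k. D z k - D (\<lambda>k. z i * F i k) k)"
        unfolding h_def by (rule lin_diff[OF l zc C_scale[OF Fc]])
      have q2: "D (\<lambda>k. z i * F i k) = (\<lambda>k. z i * D (F i) k)" by (rule lin_scale[OF l Fc])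
      show ?thesis unfolding q1 q2 Dz fbD[OF f i] by (simp add: h_def algebra_simps)
    qed
    have hz: "\<forall>k\<in>rng t. wn t k = wn t i \<longrightarrow> h k = 0"
    proof (intro ballI impI)
      fix k assume "k \<in> rng t" "wn t k = wn t i"
      then have "k = i" using wn_eq[OF v _ i] by blast
      then show "h k = 0" using fb1[OF f i] by (simp add: h_def)
    qed
    have h0: "h = (\<lambda>k. 0)" by (rule EV0[OF g hc Dh hz])
    have "z = (\<lambda>k. z i * F i k)"
    proof (rule ext)
      fix k
      have "h k = 0" using h0 by simp
      then show "z k = z i * F i k" unfolding h_def by simp
    qed
    then show ?thesis using z_def by simp
  qed
  have B: "L (F i) = (\<lambda>k. - of_nat (wn t i) * F i k)" if i: "i \<in> rng t" and n: "nc t i" for i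
  proof -
    obtain h r where h: "h \<in> rng t" "r \<in> rng t" "model_sc t i h r \<noteq> 0" using n by (auto simp: nc_def)
    define \<zeta> where "\<zeta> = D (F i) i + L (F i) i"
    have "model_br t (\<lambda>k. D (F i) k + L (F i) k) (F h) = (\<lambda>k. - model_br t (F h) (\<lambda>k. D (F i) k + L (F i) k) k)"
      by (rule br_antisym)
    also have "\<dots> = (\<lambda>k. 0)" using ann fbC[OF f i] fbC[OF f h(1)] by simp
    finally have z0: "model_br t (\<lambda>k. \<zeta> * F i k) (F h) = (\<lambda>k. 0)" using A[OF i] by (simp add: \<zeta>_def)
    have "model_br t (\<lambda>k. \<zeta> * F i k) (F h) r = \<zeta> * model_sc t i h r"
      using F_sum_single[OF f v i h(1) h(2)] grading[OF v i h(1) h(2) h(3)]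
      by (simp add: br_scale_left F_br[OF g d f i h(1)])
    moreover have "model_br t (\<lambda>k. \<zeta> * F i k) (F h) r = 0" using z0 by simp
    ultimately have "\<zeta> = 0" using h(3) by simp
    then have "(\<lambda>k. D (F i) k + L (F i) k) = (\<lambda>k. 0)" using A[OF i] by (simp add: \<zeta>_def)
    then have "L (F i) = (\<lambda>k. - D (F i) k)" by (simp add: fun_eq_iff add_eq_0_iff)
    then show ?thesis by (simp add: fbD[OF f i])
  qed
  show ?thesis
  proof
    fix i assume i: "i \<in> rng t"
    show "L (F i) = (\<lambda>k. - of_nat (wn t i) * F i k)"
    proof (cases "nc t i")
      case True then show ?thesis using B i by simp
    next
      case False
      then obtain p q where pq: "p \<in> rng t" "q \<in> rng t" "nc t p" "nc t q" "model_sc t p q i \<noteq> 0"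
        using nc_prop[OF v i] by auto
      define c where "c = model_sc t p q i"
      have br: "model_br t (F p) (F q) = (\<lambda>k. c * F i k)"
        using F_br[OF g d f pq(1,2)] F_sum_pick[OF f v pq(1,2) i pq(5)] by (simp add: c_def)
      have wi: "wn t i = wn t p + wn t q" using grading[OF v pq(1,2) i pq(5)] .
      have "L (model_br t (F p) (F q)) = (\<lambda>k. model_br t (L (F p)) (F q) k + model_br t (F p) (L (F q)) k)"
        using Ld fbC[OF f pq(1)] fbC[OF f pq(2)] by (simp add: der_on_def)
      also have "\<dots> = (\<lambda>k. - of_nat (wn t i) * (c * F i k))"
        unfolding B[OF pq(1,3)] B[OF pq(2,4)] br_scale_left br_scale_right br
        by (simp add: wi algebra_simps)
      finally have "(\<lambda>k. c * L (F i) k) = (\<lambda>k. c * (- of_nat (wn t i) * F i k))"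
        using br lin_scale[OF lL fbC[OF f i], of c] by (simp add: algebra_simps)
      then have "\<And>k. c * L (F i) k = c * (- of_nat (wn t i) * F i k)" by metis
      then have "\<And>k. c * (L (F i) k + of_nat (wn t i) * F i k) = 0" by (simp add: algebra_simps)
      then have "\<And>k. L (F i) k + of_nat (wn t i) * F i k = 0" using pq(5) c_def by simp
      then show ?thesis by (simp add: fun_eq_iff add_eq_0_iff)
    qed
  qed
qed

lemma L_all:
  assumes g: "goodall t D" and f: "fb t D F" and lL: "lin_on t L"
    and LF: "\<forall>i\<in>rng t. L (F i) = (\<lambda>k. - of_nat (wn t i) * F i k)" and u: "u \<in> model_carrier t"
  shows "L u = (\<lambda>k. - D u k)"
proof -
  have l: "lin_on t D" using g by (simp add: goodall_def)
  obtain c where c: "u = (\<lambda>k. \<Sum>i\<in>rng t. c i * F i k)" using F_span[OF g f u] by auto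
  have "L u = (\<lambda>k. \<Sum>i\<in>rng t. c i * L (F i) k)" unfolding c by (rule lin_sum[OF lL]) (use fbC[OF f] in auto)
  moreover have "D u = (\<lambda>k. \<Sum>i\<in>rng t. c i * D (F i) k)" unfolding c by (rule lin_sum[OF l]) (use fbC[OF f] in auto)
  ultimately show ?thesis using LF fbD[OF f] by (simp add: sum_negf[symmetric])
qed




lemma br_Fw:
  assumes v: "nil_valid t" and u: "u \<in> Fw t p" and w: "w \<in> Fw t q"
  shows "model_br t u w \<in> Fw t (p + q)"
  unfolding Fw_def
proof (intro CollectI ballI impI)
  fix k assume k: "k \<in> rng t" "wn t k < p + q"
  have "model_br t u w k = (\<Sum>i\<in>rng t. \<Sum>j\<in>rng t. u i * w j * model_sc t i j k)"
    using k by (simp add: model_br_def rng_def)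
  also have "\<dots> = 0"
  proof (intro sum.neutral ballI)
    fix i j assume i: "i \<in> rng t" and j: "j \<in> rng t"
    show "u i * w j * model_sc t i j k = 0"
    proof (cases "model_sc t i j k = 0")
      case False
      then have "wn t k = wn t i + wn t j" using grading[OF v i j k(1)] by simp
      then have "wn t i < p \<or> wn t j < q" using k by auto
      then show ?thesis using u w i j by (auto simp: Fw_def)
    qed simp
  qed
  finally show "model_br t u w k = 0" .
qed

lemma Fw_one: assumes v: "nil_valid t" shows "u \<in> Fw t (Suc 0)"
  unfolding Fw_def
proof (intro CollectI ballI impI)
  fix k assume k: "k \<in> rng t" "wn t k < Suc 0"
  have "wn t k \<ge> 1" by (rule wn_pos[OF v k(1)])
  with k show "u k = 0" by simp
qed

lemma raise:
  assumes l: "lin_on t D" and g: "\<forall>i\<in>rng t. good t D 0 i" and u: "u \<in> model_carrier t" "u \<in> Fw t s"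
  shows "D u \<in> Fw t (Suc s)"
  unfolding Fw_def
proof (intro CollectI ballI impI)
  fix k assume k: "k \<in> rng t" "wn t k < Suc s"
  have "D u k = (\<Sum>i\<in>rng t. u i * D (dl i) k)" using lin_expand[OF l u(1)] by metis
  also have "\<dots> = 0"
  proof (intro sum.neutral ballI)
    fix i assume i: "i \<in> rng t"
    show "u i * D (dl i) k = 0"
    proof (cases "u i = 0")
      case False
      then have "s \<le> wn t i" using u(2) i by (auto simp: Fw_def not_less)
      then have "D (dl i) k = 0" using g i k by (auto simp: good_def)
      then show ?thesis by simp
    qed simp
  qed
  finally show "D u k = 0" .
qed

locale Lsetup =
  fixes sc :: "complex \<Rightarrow> 'a::ab_group_add \<Rightarrow> 'a" and br :: "'a \<Rightarrow> 'a \<Rightarrow> 'a"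
    and N :: "'a set" and t :: nil_type and \<phi> :: "'a \<Rightarrow> nat \<Rightarrow> complex"
  assumes LA: "leibniz_algebra sc br" and ID: "is_ideal sc br N" and NV: "nil_valid t"
    and BIJ: "bij_betw \<phi> N (model_carrier t)"
    and PA: "\<forall>u\<in>N. \<forall>v\<in>N. \<phi> (u + v) = (\<lambda>k. \<phi> u k + \<phi> v k)"
    and PS: "\<forall>c. \<forall>u\<in>N. \<phi> (sc c u) = (\<lambda>k. c * \<phi> u k)"
    and PB: "\<forall>u\<in>N. \<forall>v\<in>N. \<phi> (br u v) = model_br t (\<phi> u) (\<phi> v)"
begin

sublocale V: vector_space sc using LA by (simp add: leibniz_algebra_def)

lemma bil1: "br (u + v) w = br u w + br v w" using LA by (simp add: leibniz_algebra_def bilinear_br_def)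
lemma bil2: "br u (v + w) = br u v + br u w" using LA by (simp add: leibniz_algebra_def bilinear_br_def)
lemma bil3: "br (sc c u) v = sc c (br u v)" using LA by (simp add: leibniz_algebra_def bilinear_br_def)
lemma bil4: "br u (sc c v) = sc c (br u v)" using LA by (simp add: leibniz_algebra_def bilinear_br_def)
lemma LB: "br u (br v w) = br (br u v) w - br (br u w) v" using LA by (simp add: leibniz_algebra_def)

lemma br0l[simp]: "br 0 v = 0" using bil1[of 0 0 v] by simp
lemma br0r[simp]: "br u 0 = 0" using bil2[of u 0 0] by simp
lemma brml: "br (- u) v = - br u v" using bil1[of u "- u" v] by (simp add: eq_neg_iff_add_eq_0 add.commute)
lemma brmr: "br u (- v) = - br u v" using bil2[of u v "- v"] by (simp add: eq_neg_iff_add_eq_0 add.commute)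
lemma brdl: "br (u - v) w = br u w - br v w" using bil1[of u "- v" w] brml by simp
lemma brdr: "br u (v - w) = br u v - br u w" using bil2[of u v "- w"] brmr by simp
lemma ann: "br a (br z z) = 0" using LB[of a z z] by simp

lemma NS: "V.subspace N" using ID by (simp add: is_ideal_def)
lemma N0: "0 \<in> N" using NS V.subspace_0 by blast
lemma Nadd: "u \<in> N \<Longrightarrow> v \<in> N \<Longrightarrow> u + v \<in> N" using NS V.subspace_add by blast
lemma Nsc: "u \<in> N \<Longrightarrow> sc c u \<in> N" using NS V.subspace_scale by blast
lemma Nneg: "u \<in> N \<Longrightarrow> - u \<in> N" using NS V.subspace_neg by blast
lemma Ndiff: "u \<in> N \<Longrightarrow> v \<in> N \<Longrightarrow> u - v \<in> N" using Nadd Nneg by (metis diff_conv_add_uminus)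
lemma Nbl: "u \<in> N \<Longrightarrow> br u v \<in> N" using ID by (simp add: is_ideal_def)
lemma Nbr: "u \<in> N \<Longrightarrow> br v u \<in> N" using ID by (simp add: is_ideal_def)

abbreviation C where "C \<equiv> model_carrier t"
definition \<psi> where "\<psi> = inv_into N \<phi>"

lemma \<phi>C: "u \<in> N \<Longrightarrow> \<phi> u \<in> C" using BIJ bij_betwE by blast
lemma \<psi>N: "m \<in> C \<Longrightarrow> \<psi> m \<in> N" using BIJ unfolding \<psi>_def by (metis bij_betw_def inv_into_into)
lemma \<phi>\<psi>: "m \<in> C \<Longrightarrow> \<phi> (\<psi> m) = m" using BIJ unfolding \<psi>_def by (rule bij_betw_inv_into_right)
lemma \<psi>\<phi>: "u \<in> N \<Longrightarrow> \<psi> (\<phi> u) = u" using BIJ unfolding \<psi>_def by (rule bij_betw_inv_into_left)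
lemma \<phi>inj: "u \<in> N \<Longrightarrow> v \<in> N \<Longrightarrow> \<phi> u = \<phi> v \<Longrightarrow> u = v" by (metis \<psi>\<phi>)
lemma \<psi>inj: "m \<in> C \<Longrightarrow> m' \<in> C \<Longrightarrow> \<psi> m = \<psi> m' \<Longrightarrow> m = m'" by (metis \<phi>\<psi>)

lemma \<phi>add: "u \<in> N \<Longrightarrow> v \<in> N \<Longrightarrow> \<phi> (u + v) = (\<lambda>k. \<phi> u k + \<phi> v k)" using PA by blast
lemma \<phi>sc: "u \<in> N \<Longrightarrow> \<phi> (sc c u) = (\<lambda>k. c * \<phi> u k)" using PS by blast
lemma \<phi>br: "u \<in> N \<Longrightarrow> v \<in> N \<Longrightarrow> \<phi> (br u v) = model_br t (\<phi> u) (\<phi> v)" using PB by blast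
lemma \<phi>0: "\<phi> 0 = (\<lambda>k. 0)"
proof -
  have "\<phi> (0 + 0) = (\<lambda>k. \<phi> 0 k + \<phi> 0 k)" using \<phi>add[OF N0 N0] .
  then have "\<And>k. \<phi> 0 k = \<phi> 0 k + \<phi> 0 k" by (metis add_0)
  then show ?thesis by (simp add: fun_eq_iff)
qed
lemma \<psi>0: "\<psi> (\<lambda>k. 0) = 0" using \<psi>\<phi>[OF N0] \<phi>0 by simp
lemma \<phi>0iff: "u \<in> N \<Longrightarrow> \<phi> u = (\<lambda>k. 0) \<Longrightarrow> u = 0" using \<phi>inj[OF _ N0] \<phi>0 by simp

lemma \<psi>add: "m \<in> C \<Longrightarrow> m' \<in> C \<Longrightarrow> \<psi> (\<lambda>k. m k + m' k) = \<psi> m + \<psi> m'"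
proof -
  assume m: "m \<in> C" "m' \<in> C"
  have "\<phi> (\<psi> m + \<psi> m') = (\<lambda>k. m k + m' k)" using \<phi>add[OF \<psi>N[OF m(1)] \<psi>N[OF m(2)]] \<phi>\<psi>[OF m(1)] \<phi>\<psi>[OF m(2)] by simp
  then show ?thesis using \<psi>\<phi>[OF Nadd[OF \<psi>N[OF m(1)] \<psi>N[OF m(2)]]] by simp
qed
lemma \<psi>sc: "m \<in> C \<Longrightarrow> \<psi> (\<lambda>k. c * m k) = sc c (\<psi> m)"
proof -
  assume m: "m \<in> C"
  have "\<phi> (sc c (\<psi> m)) = (\<lambda>k. c * m k)" using \<phi>sc[OF \<psi>N[OF m]] \<phi>\<psi>[OF m] by simp
  then show ?thesis using \<psi>\<phi>[OF Nsc[OF \<psi>N[OF m]], of c] by simp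
qed
lemma \<psi>br: "m \<in> C \<Longrightarrow> m' \<in> C \<Longrightarrow> \<psi> (model_br t m m') = br (\<psi> m) (\<psi> m')"
proof -
  assume m: "m \<in> C" "m' \<in> C"
  have "\<phi> (br (\<psi> m) (\<psi> m')) = model_br t m m'" using \<phi>br[OF \<psi>N[OF m(1)] \<psi>N[OF m(2)]] \<phi>\<psi>[OF m(1)] \<phi>\<psi>[OF m(2)] by simp
  then show ?thesis using \<psi>\<phi>[OF Nbl[OF \<psi>N[OF m(1)]]] by metis
qed
lemma \<psi>sum:
  assumes S: "finite S" and f: "\<And>i. i \<in> S \<Longrightarrow> f i \<in> C"
  shows "\<psi> (\<lambda>k. \<Sum>i\<in>S. c i * f i k) = (\<Sum>i\<in>S. sc (c i) (\<psi> (f i)))"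
  using S f
proof (induction S rule: finite_induct)
  case empty then show ?case using \<psi>0 by simp
next
  case (insert x F)
  have "\<psi> (\<lambda>k. \<Sum>i\<in>insert x F. c i * f i k) = \<psi> (\<lambda>k. (\<lambda>k. c x * f x k) k + (\<lambda>k. \<Sum>i\<in>F. c i * f i k) k)"
    using insert by simp
  also have "\<dots> = \<psi> (\<lambda>k. c x * f x k) + \<psi> (\<lambda>k. \<Sum>i\<in>F. c i * f i k)"
    by (rule \<psi>add) (use insert in \<open>auto intro!: C_scale C_sum\<close>)
  also have "\<dots> = (\<Sum>i\<in>insert x F. sc (c i) (\<psi> (f i)))"
    using insert \<psi>sc[of "f x" "c x"] by simp
  finally show ?case .
qed

lemma N_antisym: "u \<in> N \<Longrightarrow> v \<in> N \<Longrightarrow> br v u = - br u v"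
proof -
  assume u: "u \<in> N" and v: "v \<in> N"
  have "\<phi> (br u v + br v u) = (\<lambda>k. model_br t (\<phi> u) (\<phi> v) k + model_br t (\<phi> v) (\<phi> u) k)"
    using \<phi>add[OF Nbl[OF u] Nbl[OF v]] \<phi>br[OF u v] \<phi>br[OF v u] by simp
  also have "\<dots> = (\<lambda>k. 0)" by (subst br_antisym) simp
  finally have "br u v + br v u = 0" using \<phi>0iff Nadd[OF Nbl[OF u] Nbl[OF v]] by blast
  then show ?thesis by (simp add: eq_neg_iff_add_eq_0 add.commute)
qed

definition Rop where "Rop z u = \<phi> (br (\<psi> u) z)"
definition Lop where "Lop z u = \<phi> (br z (\<psi> u))"

lemma Rop_der: "der_on t (Rop z)"
  unfolding der_on_def
proof (intro conjI ballI allI)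
  fix u assume u: "u \<in> C"
  show "Rop z u \<in> C" unfolding Rop_def by (rule \<phi>C[OF Nbl[OF \<psi>N[OF u]]])
next
  fix u v assume u: "u \<in> C" and v: "v \<in> C"
  show "Rop z (\<lambda>k. u k + v k) = (\<lambda>k. Rop z u k + Rop z v k)"
    unfolding Rop_def \<psi>add[OF u v] bil1 by (rule \<phi>add[OF Nbl[OF \<psi>N[OF u]] Nbl[OF \<psi>N[OF v]]])
next
  fix c u assume u: "u \<in> C"
  show "Rop z (\<lambda>k. c * u k) = (\<lambda>k. c * Rop z u k)"
    unfolding Rop_def \<psi>sc[OF u] bil3 by (rule \<phi>sc[OF Nbl[OF \<psi>N[OF u]]])
next
  fix u v assume u: "u \<in> C" and v: "v \<in> C"
  have e: "br (br (\<psi> u) (\<psi> v)) z = br (\<psi> u) (br (\<psi> v) z) + br (br (\<psi> u) z) (\<psi> v)"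
    using LB[of "\<psi> u" "\<psi> v" z] by (simp add: algebra_simps)
  show "Rop z (model_br t u v) = (\<lambda>k. model_br t (Rop z u) v k + model_br t u (Rop z v) k)"
    unfolding Rop_def \<psi>br[OF u v] e
    using \<phi>add[OF Nbl[OF \<psi>N[OF u]] Nbl[OF Nbl[OF \<psi>N[OF u]]]]
      \<phi>br[OF \<psi>N[OF u] Nbl[OF \<psi>N[OF v]]] \<phi>br[OF Nbl[OF \<psi>N[OF u]] \<psi>N[OF v]] \<phi>\<psi>[OF u] \<phi>\<psi>[OF v]
    by (simp add: add.commute)
qed

lemma Lop_der: "der_on t (Lop z)"
  unfolding der_on_def
proof (intro conjI ballI allI)
  fix u assume u: "u \<in> C"
  show "Lop z u \<in> C" unfolding Lop_def by (rule \<phi>C[OF Nbr[OF \<psi>N[OF u]]])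
next
  fix u v assume u: "u \<in> C" and v: "v \<in> C"
  show "Lop z (\<lambda>k. u k + v k) = (\<lambda>k. Lop z u k + Lop z v k)"
    unfolding Lop_def \<psi>add[OF u v] bil2 by (rule \<phi>add[OF Nbr[OF \<psi>N[OF u]] Nbr[OF \<psi>N[OF v]]])
next
  fix c u assume u: "u \<in> C"
  show "Lop z (\<lambda>k. c * u k) = (\<lambda>k. c * Lop z u k)"
    unfolding Lop_def \<psi>sc[OF u] bil4 by (rule \<phi>sc[OF Nbr[OF \<psi>N[OF u]]])
next
  fix u v assume u: "u \<in> C" and v: "v \<in> C"
  have a: "br (br z (\<psi> v)) (\<psi> u) = - br (\<psi> u) (br z (\<psi> v))"
    by (rule N_antisym[OF \<psi>N[OF u] Nbr[OF \<psi>N[OF v]]])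
  have e: "br z (br (\<psi> u) (\<psi> v)) = br (br z (\<psi> u)) (\<psi> v) + br (\<psi> u) (br z (\<psi> v))"
    using LB[of z "\<psi> u" "\<psi> v"] a by simp
  show "Lop z (model_br t u v) = (\<lambda>k. model_br t (Lop z u) v k + model_br t u (Lop z v) k)"
    unfolding Lop_def \<psi>br[OF u v] e
    using \<phi>add[OF Nbl[OF Nbr[OF \<psi>N[OF u]]] Nbl[OF \<psi>N[OF u]]]
      \<phi>br[OF Nbr[OF \<psi>N[OF u]] \<psi>N[OF v]] \<phi>br[OF \<psi>N[OF u] Nbr[OF \<psi>N[OF v]]] \<phi>\<psi>[OF u] \<phi>\<psi>[OF v]
    by simp
qed


lemma basisR:
  assumes Gc: "\<forall>i\<in>rng t. G i \<in> C"
    and Gi: "\<forall>c. (\<lambda>k. \<Sum>i\<in>rng t. c i * G i k) = (\<lambda>k. 0) \<longrightarrow> (\<forall>i\<in>rng t. c i = 0)"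
    and Gs: "\<forall>u\<in>C. \<exists>c. u = (\<lambda>k. \<Sum>i\<in>rng t. c i * G i k)"
  shows "inj_on (\<lambda>i. \<psi> (G i)) (rng t) \<and> (\<lambda>i. \<psi> (G i)) ` rng t \<subseteq> N \<and>
         V.independent ((\<lambda>i. \<psi> (G i)) ` rng t) \<and> V.span ((\<lambda>i. \<psi> (G i)) ` rng t) = N \<and>
         card ((\<lambda>i. \<psi> (G i)) ` rng t) = model_dim t"
proof -
  define e where "e = (\<lambda>i. \<psi> (G i))"
  have Ginj: "inj_on G (rng t)"
  proof (rule inj_onI, rule ccontr)
    fix i j assume ij: "i \<in> rng t" "j \<in> rng t" "G i = G j" "i \<noteq> j"
    define c where "c = (\<lambda>l. (if l = i then 1 else 0) - (if l = j then 1 else (0::complex)))"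
    have "(\<lambda>k. \<Sum>l\<in>rng t. c l * G l k) = (\<lambda>k. G i k - G j k)"
      using ij by (simp add: c_def left_diff_distrib sum_subtractf if_distrib[of "\<lambda>x. x * _"] sum.delta cong: if_cong)
    also have "\<dots> = (\<lambda>k. 0)" using ij by simp
    finally have "c i = 0" using Gi ij by blast
    then show False using ij by (simp add: c_def)
  qed
  have einj: "inj_on e (rng t)"
    unfolding e_def by (rule inj_onI) (use Ginj Gc \<psi>inj in \<open>metis inj_onD\<close>)
  have eN: "e ` rng t \<subseteq> N" using Gc \<psi>N by (auto simp: e_def)
  have ind: "V.independent (e ` rng t)"
  proof
    assume "V.dependent (e ` rng t)"
    then obtain u where u: "\<exists>v\<in>e ` rng t. u v \<noteq> 0" "(\<Sum>v\<in>e ` rng t. sc (u v) v) = 0"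
      using V.dependent_finite[of "e ` rng t"] by auto
    have "(\<Sum>v\<in>e ` rng t. sc (u v) v) = (\<Sum>i\<in>rng t. sc (u (e i)) (e i))"
      by (rule sum.reindex[OF einj, unfolded comp_def])
    also have "\<dots> = \<psi> (\<lambda>k. \<Sum>i\<in>rng t. u (e i) * G i k)"
      unfolding e_def by (rule \<psi>sum[symmetric]) (use Gc in auto)
    finally have "\<psi> (\<lambda>k. \<Sum>i\<in>rng t. u (e i) * G i k) = \<psi> (\<lambda>k. 0)" using u(2) \<psi>0 by simp
    then have "(\<lambda>k. \<Sum>i\<in>rng t. u (e i) * G i k) = (\<lambda>k. 0)"
      by (rule \<psi>inj[rotated 2]) (use Gc in \<open>auto intro!: C_sum C_zero\<close>)
    then have "\<forall>i\<in>rng t. u (e i) = 0" using spec[OF Gi, of "\<lambda>i. u (e i)"] by simp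
    then show False using u(1) by auto
  qed
  have sp: "V.span (e ` rng t) = N"
  proof
    show "V.span (e ` rng t) \<subseteq> N" by (rule V.span_minimal[OF eN NS])
  next
    show "N \<subseteq> V.span (e ` rng t)"
    proof
      fix v assume v: "v \<in> N"
      obtain c where c: "\<phi> v = (\<lambda>k. \<Sum>i\<in>rng t. c i * G i k)" using Gs \<phi>C[OF v] by blast
      have "v = \<psi> (\<phi> v)" using \<psi>\<phi>[OF v] by simp
      also have "\<dots> = (\<Sum>i\<in>rng t. sc (c i) (e i))" unfolding c e_def by (rule \<psi>sum) (use Gc in auto)
      also have "\<dots> \<in> V.span (e ` rng t)"
        by (intro V.span_sum V.span_scale V.span_base) auto
      finally show "v \<in> V.span (e ` rng t)" .
    qed
  qed
  have "card (e ` rng t) = model_dim t" using card_image[OF einj] by (simp add: rng_def)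
  then show ?thesis using einj eN ind sp unfolding e_def by simp
qed

lemma nilp_contra:
  assumes NR: "is_nilradical sc br N" and y: "y \<notin> N"
    and dec: "\<forall>v. \<exists>c. v - sc c y \<in> N" and yy: "br y y \<in> N"
    and g: "\<forall>i\<in>rng t. good t (Rop y) 0 i"
  shows False
proof -
  define S where "S = (\<lambda>s. {u \<in> N. \<phi> u \<in> Fw t s})"
  have Ssub: "V.subspace (S s)" for s
  proof (rule V.subspaceI)
    show "0 \<in> S s" using N0 \<phi>0 by (simp add: S_def Fw_def)
  next
    fix u v assume "u \<in> S s" "v \<in> S s"
    then show "u + v \<in> S s" using Nadd \<phi>add by (simp add: S_def Fw_def)
  next
    fix c u assume "u \<in> S s"
    then show "sc c u \<in> S s" using Nsc \<phi>sc by (simp add: S_def Fw_def)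
  qed
  have decomp: "\<And>v. \<exists>c n. n \<in> N \<and> v = sc c y + n"
    using dec by (metis add.commute diff_add_cancel)
  have bry: "br u y \<in> N" for u
  proof -
    obtain c n where cn: "n \<in> N" "u = sc c y + n" using decomp by blast
    show ?thesis unfolding cn(2) bil1 bil3 by (intro Nadd Nsc yy Nbl cn(1))
  qed
  have brN: "br u v \<in> N" for u v
  proof -
    obtain c n where cn: "n \<in> N" "v = sc c y + n" using decomp by blast
    show ?thesis unfolding cn(2) bil2 bil4 by (intro Nadd Nsc bry Nbr cn(1))
  qed
  have l: "lin_on t (Rop y)" using Rop_der by (rule der_lin)
  have LC: "lower_central sc br UNIV (Suc k) \<subseteq> S (Suc k)" for k
  proof (induction k)
    case 0
    show ?case
      unfolding lower_central.simps(2)[of _ _ _ 0]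
    proof (rule V.span_minimal[OF _ Ssub])
      show "{br u v |u v. u \<in> lower_central sc br UNIV 0 \<and> v \<in> UNIV} \<subseteq> S (Suc 0)"
      proof (rule subsetI)
        fix w assume "w \<in> {br u v |u v. u \<in> lower_central sc br UNIV 0 \<and> v \<in> UNIV}"
        then obtain u v where w: "w = br u v" by blast
        show "w \<in> S (Suc 0)" using brN[of u v] Fw_one[OF NV] by (auto simp: S_def w)
      qed
    qed
  next
    case (Suc k)
    show ?case
      unfolding lower_central.simps(2)[of _ _ _ "Suc k"]
    proof (rule V.span_minimal[OF _ Ssub], rule subsetI)
      fix w assume "w \<in> {br u v |u v. u \<in> lower_central sc br UNIV (Suc k) \<and> v \<in> UNIV}"
      then obtain u v where w: "w = br u v" and u: "u \<in> S (Suc k)" using Suc by blast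
      obtain c n where cn: "n \<in> N" "v = sc c y + n" using decomp by blast
      have uN: "u \<in> N" and uF: "\<phi> u \<in> Fw t (Suc k)" using u by (auto simp: S_def)
      have "\<phi> (br u y) = Rop y (\<phi> u)" by (simp add: Rop_def \<psi>\<phi>[OF uN])
      then have s1: "br u y \<in> S (Suc (Suc k))"
        using raise[OF l g \<phi>C[OF uN] uF] Nbl[OF uN] by (simp add: S_def)
      have "\<phi> (br u n) \<in> Fw t (Suc k + Suc 0)"
        unfolding \<phi>br[OF uN cn(1)] by (rule br_Fw[OF NV uF Fw_one[OF NV]])
      then have s2: "br u n \<in> S (Suc (Suc k))" using Nbl[OF uN] by (simp add: S_def)
      show "w \<in> S (Suc (Suc k))" unfolding w cn(2) bil2 bil4
        by (rule V.subspace_add[OF Ssub V.subspace_scale[OF Ssub s1] s2])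
    qed
  qed
  obtain B where B: "\<forall>k\<in>rng t. wn t k \<le> B" using bound_w by auto
  have "S (Suc B) \<subseteq> {0}"
  proof
    fix u assume u: "u \<in> S (Suc B)"
    then have uN: "u \<in> N" by (simp add: S_def)
    have "\<phi> u = (\<lambda>k. 0)"
      by (rule C_eqI[OF \<phi>C[OF uN] C_zero]) (use u B in \<open>auto simp: S_def Fw_def\<close>)
    then show "u \<in> {0}" using \<phi>0iff[OF uN] by simp
  qed
  then have "lower_central sc br UNIV (Suc B) = {0}"
    using LC[of B] V.span_zero by (auto simp: lower_central.simps(2)[of _ _ _ B])
  then have nil: "nilpotent_sub sc br UNIV" unfolding nilpotent_sub_def by blast
  have "is_ideal sc br UNIV" by (simp add: is_ideal_def)
  then have "UNIV = N" using NR nil by (auto simp: is_nilradical_def)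
  then show False using y by simp
qed


lemma main:
  assumes FD: "fin_dim sc" and NR: "is_nilradical sc br N" and DIM: "V.dim UNIV = V.dim N + 1"
  shows "\<exists>(e :: nat \<Rightarrow> 'a) (x :: 'a).
      inj_on e {1..model_dim t} \<and> x \<notin> e ` {1..model_dim t} \<and>
      V.independent (insert x (e ` {1..model_dim t})) \<and>
      V.span (insert x (e ` {1..model_dim t})) = UNIV \<and>
      V.span (e ` {1..model_dim t}) = N \<and>
      (\<forall>i\<in>{1..model_dim t}. \<forall>j\<in>{1..model_dim t}.
          br (e i) (e j) = (\<Sum>k\<in>{1..model_dim t}. sc (model_sc t i j k) (e k))) \<and>
      (\<forall>i\<in>{1..model_dim t}.
          br (e i) x = sc (model_wt t i) (e i) \<and> br x (e i) = sc (- model_wt t i) (e i)) \<and>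
      br x x = 0"
proof -
  have R: "{1..model_dim t} = rng t" by (simp add: rng_def)
  define m where "m = model_dim t"
  have b0: "inj_on (\<lambda>i. \<psi> (dl i)) (rng t) \<and> (\<lambda>i. \<psi> (dl i)) ` rng t \<subseteq> N \<and>
         V.independent ((\<lambda>i. \<psi> (dl i)) ` rng t) \<and> V.span ((\<lambda>i. \<psi> (dl i)) ` rng t) = N \<and>
         card ((\<lambda>i. \<psi> (dl i)) ` rng t) = model_dim t"
  proof (rule basisR)
    show "\<forall>i\<in>rng t. dl i \<in> C" using dl_carrier by blast
    show "\<forall>u\<in>C. \<exists>c. u = (\<lambda>k. \<Sum>i\<in>rng t. c i * dl i k)" using expand_dl by blast
    show "\<forall>c. (\<lambda>k. \<Sum>i\<in>rng t. c i * dl i k) = (\<lambda>k. 0) \<longrightarrow> (\<forall>i\<in>rng t. c i = 0)"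
    proof (intro allI impI ballI)
      fix c i assume z: "(\<lambda>k. \<Sum>i\<in>rng t. c i * dl i k) = (\<lambda>k. 0)" and i: "i \<in> rng t"
      have "(\<Sum>l\<in>rng t. c l * dl l i) = c i" by (subst sum_pick[where p = i and c = 1]) (auto simp: dl_def i)
      then show "c i = 0" using z by metis
    qed
  qed
  define E0 where "E0 = (\<lambda>i. \<psi> (dl i)) ` rng t"
  have dimN: "V.dim N = m"
    using V.dim_unique[of E0 N m] b0 unfolding E0_def m_def by auto
  obtain B0 where B0: "finite B0" "V.span B0 = UNIV" using FD by (auto simp: fin_dim_def)
  obtain B where B: "V.independent B" "UNIV \<subseteq> V.span B"
    using V.basis_exists[of UNIV] by metis
  have finB: "finite B" using V.independent_span_bound[OF B0(1) B(1)] B0(2) by auto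
  interpret FDV: finite_dimensional_vector_space sc B
    by unfold_locales (use finB B in auto)
  have spanI: "V.independent (insert z E) \<and> V.span (insert z E) = UNIV"
    if E: "V.independent E" "V.span E = N" "card E = m" "finite E" and z: "z \<notin> N" for E z
  proof -
    have zE: "z \<notin> V.span E" using E z by simp
    have ind: "V.independent (insert z E)" by (rule V.independent_insertI[OF zE E(1)])
    have "z \<notin> E" using zE V.span_base by blast
    then have "card (insert z E) = m + 1" using E by simp
    then have "V.dim UNIV \<le> card (insert z E)" using DIM dimN by simp
    then have "UNIV \<subseteq> V.span (insert z E)" using FDV.card_ge_dim_independent[of "insert z E" UNIV] ind by simp
    then show ?thesis using ind by auto
  qed
  have E0p: "V.independent E0" "V.span E0 = N" "card E0 = m" "finite E0"
    using b0 by (auto simp: E0_def m_def)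
  obtain y where y: "y \<notin> N"
  proof -
    have "N \<noteq> UNIV" using DIM by auto
    then show ?thesis using that by auto
  qed
  have dec: "\<forall>v. \<exists>c. v - sc c y \<in> N"
  proof
    fix v
    have "v \<in> V.span (insert y E0)" using spanI[OF E0p y] by simp
    then show "\<exists>c. v - sc c y \<in> N" using E0p(2) by (simp add: V.span_insert)
  qed
  have yy: "br y y \<in> N"
  proof -
    obtain c where c: "br y y - sc c y \<in> N" using dec by blast
    define n where "n = br y y - sc c y"
    have yyn: "br y y = sc c y + n" by (simp add: n_def)
    have "0 = br y (br y y)" using ann by simp
    also have "\<dots> = sc c (sc c y + n) + br y n" unfolding yyn[symmetric] unfolding yyn bil2 bil4 by simp
    also have "\<dots> = sc (c * c) y + (sc c n + br y n)" by (simp add: V.scale_right_distrib algebra_simps)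
    finally have h: "sc (c * c) y + (sc c n + br y n) = 0" by simp
    then have "sc (c * c) y = - (sc c n + br y n)" by (simp only: eq_neg_iff_add_eq_0)
    then have cy: "sc (c * c) y \<in> N" using c n_def by (metis Nadd Nbr Nneg Nsc)
    have "c = 0"
    proof (rule ccontr)
      assume "c \<noteq> 0"
      then have "y = sc (1 / (c * c)) (sc (c * c) y)" by simp
      then show False using Nsc[OF cy] y by metis
    qed
    then show ?thesis using c by simp
  qed
  define D where "D = Rop y"
  define a where "a = D (dl 1) 1"
  have gD: "\<forall>i\<in>rng t. good t D a i" unfolding a_def D_def by (rule der_all[OF Rop_der NV])
  have a0: "a \<noteq> 0"
  proof
    assume "a = 0"
    then show False using nilp_contra[OF NR y dec yy] gD by (simp add: D_def)
  qed
  define x where "x = sc (1 / a) y"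
  have xN: "x \<notin> N"
  proof
    assume "x \<in> N"
    then have "sc a x \<in> N" by (rule Nsc)
    then show False using y a0 by (simp add: x_def)
  qed
  define D' where "D' = Rop x"
  have dD': "der_on t D'" unfolding D'_def by (rule Rop_der)
  have D'eq: "D' u = (\<lambda>k. (1 / a) * D u k)" if u: "u \<in> C" for u
    unfolding D'_def D_def Rop_def x_def bil4 by (rule \<phi>sc[OF Nbl[OF \<psi>N[OF u]]])
  have D'1: "D' (dl 1) 1 = 1"
  proof -
    have "1 \<in> rng t" using NV by (cases t) (auto simp: rng_def)
    then show ?thesis using D'eq[OF dl_carrier] a0 by (simp add: a_def)
  qed
  have gD': "\<forall>i\<in>rng t. good t D' 1 i" using der_all[OF dD' NV] D'1 by simp
  have ga: "goodall t D'" using gD' NV der_lin[OF dD'] by (simp add: goodall_def)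
  obtain F where F: "fb t D' F" using fb_exists[OF ga] by auto
  have bF: "inj_on (\<lambda>i. \<psi> (F i)) (rng t) \<and> (\<lambda>i. \<psi> (F i)) ` rng t \<subseteq> N \<and>
         V.independent ((\<lambda>i. \<psi> (F i)) ` rng t) \<and> V.span ((\<lambda>i. \<psi> (F i)) ` rng t) = N \<and>
         card ((\<lambda>i. \<psi> (F i)) ` rng t) = model_dim t"
  proof (rule basisR)
    show "\<forall>i\<in>rng t. F i \<in> C" using fbC[OF F] by blast
    show "\<forall>u\<in>C. \<exists>c. u = (\<lambda>k. \<Sum>i\<in>rng t. c i * F i k)" using F_span[OF ga F] by blast
    show "\<forall>c. (\<lambda>k. \<Sum>i\<in>rng t. c i * F i k) = (\<lambda>k. 0) \<longrightarrow> (\<forall>i\<in>rng t. c i = 0)"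
      using F_indep[OF ga F] by blast
  qed
  define e where "e = (\<lambda>i. \<psi> (F i))"
  have eN: "e i \<in> N" if "i \<in> rng t" for i using bF that by (auto simp: e_def)
  have Ep: "V.independent (e ` rng t)" "V.span (e ` rng t) = N" "card (e ` rng t) = m" "finite (e ` rng t)"
    using bF by (auto simp: e_def m_def)
  have xsp: "V.independent (insert x (e ` rng t)) \<and> V.span (insert x (e ` rng t)) = UNIV"
    by (rule spanI[OF Ep xN])
  define L where "L = Lop x"
  have dL: "der_on t L" unfolding L_def by (rule Lop_der)
  have xx: "br x x \<in> N" unfolding x_def bil3 bil4 by (intro Nsc yy)
  have annm: "\<forall>u\<in>C. \<forall>w\<in>C. model_br t w (\<lambda>k. D' u k + L u k) = (\<lambda>k. 0)"
  proof (intro ballI)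
    fix u w assume u: "u \<in> C" and w: "w \<in> C"
    define n where "n = \<psi> u"
    have nN: "n \<in> N" using \<psi>N[OF u] by (simp add: n_def)
    have "(\<lambda>k. D' u k + L u k) = \<phi> (br n x + br x n)"
      unfolding D'_def L_def Rop_def Lop_def n_def[symmetric] by (rule \<phi>add[symmetric]) (use nN Nbl Nbr in auto)
    moreover have sq: "br n x + br x n = br (n + x) (n + x) - br n n - br x x"
      by (simp add: bil1 bil2 algebra_simps)
    moreover have sN: "br n x + br x n \<in> N" using nN Nbl Nbr Nadd by blast
    moreover have "br (\<psi> w) (br n x + br x n) = 0" unfolding sq brdr ann by simp
    ultimately show "model_br t w (\<lambda>k. D' u k + L u k) = (\<lambda>k. 0)"
      using \<phi>br[OF \<psi>N[OF w] sN] \<phi>\<psi>[OF w] \<phi>0 by simp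
  qed
  have commm: "\<forall>u\<in>C. L (D' u) = D' (L u)"
  proof
    fix u assume u: "u \<in> C"
    define n where "n = \<psi> u"
    have nN: "n \<in> N" using \<psi>N[OF u] by (simp add: n_def)
    have "br (br x x) n = 0" using N_antisym[OF nN xx] ann by simp
    then have "br x (br n x) = br (br x n) x" using LB[of x n x] by simp
    then show "L (D' u) = D' (L u)"
      unfolding D'_def L_def Rop_def Lop_def n_def[symmetric] using \<psi>\<phi>[OF Nbl[OF nN]] \<psi>\<phi>[OF Nbr[OF nN]] by simp
  qed
  have LF: "\<forall>i\<in>rng t. L (F i) = (\<lambda>k. - of_nat (wn t i) * F i k)"
    by (rule L_main[OF ga dD' F dL annm commm])
  have Lall: "L u = (\<lambda>k. - D' u k)" if "u \<in> C" for u
    by (rule L_all[OF ga F der_lin[OF dL] LF that])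
  have xx0: "br x x = 0"
  proof -
    define s where "s = br x x"
    have sN: "s \<in> N" using xx by (simp add: s_def)
    have "L (\<phi> s) = \<phi> (br x s)" unfolding L_def Lop_def using \<psi>\<phi>[OF sN] by simp
    also have "\<dots> = (\<lambda>k. 0)" unfolding s_def ann \<phi>0 ..
    finally have "(\<lambda>k. - D' (\<phi> s) k) = (\<lambda>k. 0)" using Lall[OF \<phi>C[OF sN]] by simp
    then have "D' (\<phi> s) = (\<lambda>k. of_nat 0 * \<phi> s k)" by (simp add: fun_eq_iff)
    moreover have "\<forall>k\<in>rng t. wn t k = 0 \<longrightarrow> \<phi> s k = 0" using wn_pos[OF NV] by (metis not_one_le_zero)
    ultimately have "\<phi> s = (\<lambda>k. 0)" using EV0[OF ga \<phi>C[OF sN]] by blast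
    then show ?thesis using \<phi>0iff[OF sN] by (simp add: s_def)
  qed
  have ee: "br (e i) (e j) = (\<Sum>k\<in>rng t. sc (model_sc t i j k) (e k))" if i: "i \<in> rng t" "j \<in> rng t" for i j
  proof -
    have "br (e i) (e j) = \<psi> (model_br t (F i) (F j))" unfolding e_def by (rule \<psi>br[symmetric, OF fbC[OF F i(1)] fbC[OF F i(2)]])
    also have "\<dots> = \<psi> (\<lambda>k. \<Sum>l\<in>rng t. model_sc t i j l * F l k)" unfolding F_br[OF ga dD' F i] ..
    also have "\<dots> = (\<Sum>k\<in>rng t. sc (model_sc t i j k) (e k))" unfolding e_def by (rule \<psi>sum) (use fbC[OF F] in auto)
    finally show ?thesis .
  qed
  have ex: "br (e i) x = sc (model_wt t i) (e i)" if i: "i \<in> rng t" for i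
  proof -
    have "br (e i) x = \<psi> (D' (F i))" unfolding D'_def Rop_def e_def using \<psi>\<phi>[OF Nbl[OF \<psi>N[OF fbC[OF F i]]]] by simp
    also have "\<dots> = sc (model_wt t i) (e i)" unfolding fbD[OF F i] e_def model_wt_wn by (rule \<psi>sc[OF fbC[OF F i]])
    finally show ?thesis .
  qed
  have xe: "br x (e i) = sc (- model_wt t i) (e i)" if i: "i \<in> rng t" for i
  proof -
    have "br x (e i) = \<psi> (L (F i))" unfolding L_def Lop_def e_def using \<psi>\<phi>[OF Nbr[OF \<psi>N[OF fbC[OF F i]]]] by simp
    also have "\<dots> = sc (- model_wt t i) (e i)" unfolding LF[rule_format, OF i] e_def model_wt_wn by (rule \<psi>sc[OF fbC[OF F i]])
    finally show ?thesis .
  qed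
  have einj: "inj_on e (rng t)" using bF by (simp add: e_def)
  have xnot: "x \<notin> e ` rng t" using xN eN by auto
  show ?thesis
    unfolding R
    apply (rule exI[of _ e], rule exI[of _ x])
    using einj xnot xsp Ep(2) ee ex xe xx0 by blast
qed

end


theorem theorem3p6:
  fixes sc :: "complex \<Rightarrow> 'a::ab_group_add \<Rightarrow> 'a"
    and br :: "'a \<Rightarrow> 'a \<Rightarrow> 'a"
    and N :: "'a set" and t :: nil_type
  assumes "leibniz_algebra sc br"
    and "fin_dim sc"
    and "solvable sc br"
    and "is_nilradical sc br N"
    and "nil_valid t"
    and "iso_to_model sc br N t"
    and "vector_space.dim sc (UNIV :: 'a set) = vector_space.dim sc N + 1"
  shows "\<exists>(e :: nat \<Rightarrow> 'a) (x :: 'a).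
      inj_on e {1..model_dim t} \<and> x \<notin> e ` {1..model_dim t} \<and>
      module.independent sc (insert x (e ` {1..model_dim t})) \<and>
      module.span sc (insert x (e ` {1..model_dim t})) = UNIV \<and>
      module.span sc (e ` {1..model_dim t}) = N \<and>
      (\<forall>i\<in>{1..model_dim t}. \<forall>j\<in>{1..model_dim t}.
          br (e i) (e j) = (\<Sum>k\<in>{1..model_dim t}. sc (model_sc t i j k) (e k))) \<and>
      (\<forall>i\<in>{1..model_dim t}.
          br (e i) x = sc (model_wt t i) (e i) \<and> br x (e i) = sc (- model_wt t i) (e i)) \<and>
      br x x = 0"
  proof -
  obtain \<phi> :: "'a \<Rightarrow> nat \<Rightarrow> complex" where
    B: "bij_betw \<phi> N (model_carrier t)"
    and A: "\<forall>u\<in>N. \<forall>v\<in>N. \<phi> (u + v) = (\<lambda>k. \<phi> u k + \<phi> v k)"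
    and S: "\<forall>c. \<forall>u\<in>N. \<phi> (sc c u) = (\<lambda>k. c * \<phi> u k)"
    and P: "\<forall>u\<in>N. \<forall>v\<in>N. \<phi> (br u v) = model_br t (\<phi> u) (\<phi> v)"
    using assms(6) unfolding iso_to_model_def by blast
  have I: "is_ideal sc br N" using assms(4) by (simp add: is_nilradical_def)
  interpret Lsetup sc br N t \<phi>
    by unfold_locales (use assms(1,5) I B A S P in auto)
  show ?thesis using main[OF assms(2) assms(4) assms(7)] by simp
qed

end
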